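(* Let $K,L$ be field extensions of a field $C$. The following are equivalent: \begin{enumerate} \item ${\rm Th}_{\exists_1}(K,C)\subseteq{\rm Th}_{\exists_1}(L,C)$; \item (a) there exists an embedding over $C$ of the relative algebraic closure $\overline{C}^K$ of $C$ in $K$ into $L$, and (b) if $K$ is infinite, then so is $L$. \end{enumerate}
   Context: ${\rm Th}_{\exists_1}(K,C)$ is the set of positive boolean combinations of $\mathfrak{L}_{\rm ring}(C)$-sentences (ring language with constants for elements of $C$) of the form $\exists x\,\psi$ or $\psi$ with $\psi$ quantifier-free that hold in $K$. *)

theory Defs
  imports "HOL-Computational_Algebra.Polynomial"
begin

text \<open>A field extension of C is a field K together with a ring homomorphism
  C -> K (automatically injective since C is a field).\<close>
definition ring_hom_fn :: "('a::ring_1 \<Rightarrow> 'b::ring_1) \<Rightarrow> bool" where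
  "ring_hom_fn f \<longleftrightarrow> f 1 = 1 \<and> (\<forall>x y. f (x + y) = f x + f y) \<and> (\<forall>x y. f (x * y) = f x * f y)"

datatype 'c tm = Var | Const 'c | Zero | One
  | Add "'c tm" "'c tm" | Sub "'c tm" "'c tm" | Minus "'c tm" | Mul "'c tm" "'c tm"

primrec tval :: "('c \<Rightarrow> 'k::field) \<Rightarrow> 'k \<Rightarrow> 'c tm \<Rightarrow> 'k" where
  "tval \<iota> a Var = a"
| "tval \<iota> a (Const c) = \<iota> c"
| "tval \<iota> a Zero = 0"
| "tval \<iota> a One = 1"
| "tval \<iota> a (Add s t) = tval \<iota> a s + tval \<iota> a t"
| "tval \<iota> a (Sub s t) = tval \<iota> a s - tval \<iota> a t"
| "tval \<iota> a (Minus s) = - tval \<iota> a s"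
| "tval \<iota> a (Mul s t) = tval \<iota> a s * tval \<iota> a t"

primrec tm_closed :: "'c tm \<Rightarrow> bool" where
  "tm_closed Var = False"
| "tm_closed (Const c) = True"
| "tm_closed Zero = True"
| "tm_closed One = True"
| "tm_closed (Add s t) = (tm_closed s \<and> tm_closed t)"
| "tm_closed (Sub s t) = (tm_closed s \<and> tm_closed t)"
| "tm_closed (Minus s) = tm_closed s"
| "tm_closed (Mul s t) = (tm_closed s \<and> tm_closed t)"

datatype 'c qf = QTrue | QFalse | QEq "'c tm" "'c tm" | QNot "'c qf"
  | QAnd "'c qf" "'c qf" | QOr "'c qf" "'c qf" | QImp "'c qf" "'c qf"

primrec qval :: "('c \<Rightarrow> 'k::field) \<Rightarrow> 'k \<Rightarrow> 'c qf \<Rightarrow> bool" where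
  "qval \<iota> a QTrue = True"
| "qval \<iota> a QFalse = False"
| "qval \<iota> a (QEq s t) = (tval \<iota> a s = tval \<iota> a t)"
| "qval \<iota> a (QNot p) = (\<not> qval \<iota> a p)"
| "qval \<iota> a (QAnd p q) = (qval \<iota> a p \<and> qval \<iota> a q)"
| "qval \<iota> a (QOr p q) = (qval \<iota> a p \<or> qval \<iota> a q)"
| "qval \<iota> a (QImp p q) = (qval \<iota> a p \<longrightarrow> qval \<iota> a q)"

primrec qf_closed :: "'c qf \<Rightarrow> bool" where
  "qf_closed QTrue = True"
| "qf_closed QFalse = True"
| "qf_closed (QEq s t) = (tm_closed s \<and> tm_closed t)"
| "qf_closed (QNot p) = qf_closed p"
| "qf_closed (QAnd p q) = (qf_closed p \<and> qf_closed q)"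
| "qf_closed (QOr p q) = (qf_closed p \<and> qf_closed q)"
| "qf_closed (QImp p q) = (qf_closed p \<and> qf_closed q)"

text \<open>Positive boolean combinations of sentences of the form (EX x. psi) or psi
  (psi quantifier-free; in the second case psi must be a sentence, i.e. closed).\<close>
datatype 'c ex1 = ExS "'c qf" | QfS "'c qf" | SAnd "'c ex1" "'c ex1" | SOr "'c ex1" "'c ex1"

primrec ex1_wf :: "'c ex1 \<Rightarrow> bool" where
  "ex1_wf (ExS p) = True"
| "ex1_wf (QfS p) = qf_closed p"
| "ex1_wf (SAnd s t) = (ex1_wf s \<and> ex1_wf t)"
| "ex1_wf (SOr s t) = (ex1_wf s \<and> ex1_wf t)"

primrec ex1_holds :: "('c \<Rightarrow> 'k::field) \<Rightarrow> 'c ex1 \<Rightarrow> bool" where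
  "ex1_holds \<iota> (ExS p) = (\<exists>a. qval \<iota> a p)"
| "ex1_holds \<iota> (QfS p) = qval \<iota> 0 p"
| "ex1_holds \<iota> (SAnd s t) = (ex1_holds \<iota> s \<and> ex1_holds \<iota> t)"
| "ex1_holds \<iota> (SOr s t) = (ex1_holds \<iota> s \<or> ex1_holds \<iota> t)"

definition Th_ex1 :: "('c \<Rightarrow> 'k::field) \<Rightarrow> 'c ex1 set" where
  "Th_ex1 \<iota> = {\<phi>. ex1_wf \<phi> \<and> ex1_holds \<iota> \<phi>}"

definition rel_alg_closure :: "('c::field \<Rightarrow> 'k::field) \<Rightarrow> 'k set" where
  "rel_alg_closure \<iota> = {a. \<exists>p::'c poly. p \<noteq> 0 \<and> poly (map_poly \<iota> p) a = 0}"

definition embedding_over :: "('c \<Rightarrow> 'k::field) \<Rightarrow> ('c \<Rightarrow> 'l::field) \<Rightarrow> 'k set \<Rightarrow> ('k \<Rightarrow> 'l) \<Rightarrow> bool" where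
  "embedding_over \<iota>K \<iota>L A \<sigma> \<longleftrightarrow>
     inj_on \<sigma> A \<and> \<sigma> 1 = 1 \<and>
     (\<forall>x\<in>A. \<forall>y\<in>A. \<sigma> (x + y) = \<sigma> x + \<sigma> y \<and> \<sigma> (x * y) = \<sigma> x * \<sigma> y) \<and>
     (\<forall>c. \<sigma> (\<iota>K c) = \<iota>L c)"

end

theory Submission
  imports Defs "HOL-Algebra.Algebraic_Closure_Type" "HOL-Analysis.Function_Topology"
begin

definition polyin :: "'k::field set \<Rightarrow> 'k poly \<Rightarrow> bool" where
  "polyin R p \<longleftrightarrow> (\<forall>i. poly.coeff p i \<in> R)"

definition subr :: "'k::field set \<Rightarrow> bool" where
  "subr R \<longleftrightarrow> 0 \<in> R \<and> 1 \<in> R \<and> (\<forall>x\<in>R. \<forall>y\<in>R. x + y \<in> R \<and> x * y \<in> R \<and> - x \<in> R)"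

definition homr :: "'k::field set \<Rightarrow> ('k \<Rightarrow> 'm::field) \<Rightarrow> bool" where
  "homr R \<phi> \<longleftrightarrow> \<phi> 0 = 0 \<and> \<phi> 1 = 1 \<and> (\<forall>x\<in>R. \<forall>y\<in>R. \<phi> (x + y) = \<phi> x + \<phi> y \<and> \<phi> (x * y) = \<phi> x * \<phi> y)"

lemma subrD: assumes "subr R"
  shows "0 \<in> R" "1 \<in> R" "x \<in> R \<Longrightarrow> y \<in> R \<Longrightarrow> x + y \<in> R"
   "x \<in> R \<Longrightarrow> y \<in> R \<Longrightarrow> x * y \<in> R" "x \<in> R \<Longrightarrow> - x \<in> R"
   "x \<in> R \<Longrightarrow> y \<in> R \<Longrightarrow> x - y \<in> R" "x \<in> R \<Longrightarrow> x ^ n \<in> R"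
proof -
  show 1: "0 \<in> R" "1 \<in> R" using assms by (auto simp: subr_def)
  show 2: "x \<in> R \<Longrightarrow> y \<in> R \<Longrightarrow> x + y \<in> R" "x \<in> R \<Longrightarrow> y \<in> R \<Longrightarrow> x * y \<in> R"
    "x \<in> R \<Longrightarrow> - x \<in> R" for x y using assms by (auto simp: subr_def)
  show "x \<in> R \<Longrightarrow> y \<in> R \<Longrightarrow> x - y \<in> R" using assms unfolding subr_def
    by (metis diff_conv_add_uminus)
  show "x \<in> R \<Longrightarrow> x ^ n \<in> R" by (induction n) (use 1 2 in auto)
qed

lemma homrD: assumes "homr R \<phi>"
  shows "\<phi> 0 = 0" "\<phi> 1 = 1" "x \<in> R \<Longrightarrow> y \<in> R \<Longrightarrow> \<phi> (x + y) = \<phi> x + \<phi> y"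
    "x \<in> R \<Longrightarrow> y \<in> R \<Longrightarrow> \<phi> (x * y) = \<phi> x * \<phi> y"
  using assms by (auto simp: homr_def)

lemma homr_uminus: assumes "homr R \<phi>" "subr R" "x \<in> R" shows "\<phi> (- x) = - \<phi> x"
proof -
  have "\<phi> (x + - x) = \<phi> x + \<phi> (- x)" using homrD(3)[OF assms(1) assms(3) subrD(5)[OF assms(2,3)]] .
  then show ?thesis using homrD(1)[OF assms(1)] by (simp add: eq_neg_iff_add_eq_0 add.commute)
qed

lemma homr_diff: assumes "homr R \<phi>" "subr R" "x \<in> R" "y \<in> R" shows "\<phi> (x - y) = \<phi> x - \<phi> y"
  using homrD(3)[OF assms(1) assms(3) subrD(5)[OF assms(2,4)]] homr_uminus[OF assms(1,2,4)] by simp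

lemma homr_power: assumes "homr R \<phi>" "subr R" "x \<in> R" shows "\<phi> (x ^ n) = \<phi> x ^ n"
proof (induction n)
  case 0 then show ?case using homrD(2)[OF assms(1)] by simp
next
  case (Suc n) then show ?case using homrD(4)[OF assms(1) assms(3) subrD(7)[OF assms(2,3)]] by simp
qed

lemma homr_sum: assumes "homr R \<phi>" "subr R" "finite I" "\<forall>i\<in>I. f i \<in> R"
  shows "\<phi> (\<Sum>i\<in>I. f i) = (\<Sum>i\<in>I. \<phi> (f i))" "(\<Sum>i\<in>I. f i) \<in> R"
proof -
  have "\<phi> (\<Sum>i\<in>I. f i) = (\<Sum>i\<in>I. \<phi> (f i)) \<and> (\<Sum>i\<in>I. f i) \<in> R"
    using assms(3,4)
  proof (induction I)
    case empty then show ?case using homrD[OF assms(1)] subrD[OF assms(2)] by simp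
  next
    case (insert a I)
    then show ?case using homrD(3)[OF assms(1)] subrD(3)[OF assms(2)] by simp
  qed
  then show "\<phi> (\<Sum>i\<in>I. f i) = (\<Sum>i\<in>I. \<phi> (f i))" "(\<Sum>i\<in>I. f i) \<in> R" by auto
qed

lemma polyin_add: "subr R \<Longrightarrow> polyin R p \<Longrightarrow> polyin R q \<Longrightarrow> polyin R (p + q)"
  by (simp add: polyin_def subrD)
lemma polyin_diff: "subr R \<Longrightarrow> polyin R p \<Longrightarrow> polyin R q \<Longrightarrow> polyin R (p - q)"
  by (simp add: polyin_def subrD)
lemma polyin_mult: assumes "subr R" "polyin R p" "polyin R q" shows "polyin R (p * q)"
  using assms unfolding polyin_def coeff_mult by (auto intro!: homr_sum(2)[of R id] simp: subrD homr_def)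
lemma polyin_const: "subr R \<Longrightarrow> c \<in> R \<Longrightarrow> polyin R [:c:]"
  by (simp add: polyin_def coeff_pCons subrD split: nat.split)
lemma polyin_X: "subr R \<Longrightarrow> polyin R [:0,1:]"
  by (simp add: polyin_def coeff_pCons subrD split: nat.split)
lemma polyin_monom: "subr R \<Longrightarrow> c \<in> R \<Longrightarrow> polyin R (Polynomial.monom c n)"
  by (simp add: polyin_def subrD)
lemma polyin_smult: "subr R \<Longrightarrow> c \<in> R \<Longrightarrow> polyin R p \<Longrightarrow> polyin R (Polynomial.smult c p)"
  by (simp add: polyin_def subrD)

lemma map_poly_add_on: assumes "homr R \<phi>" "polyin R p" "polyin R q"
  shows "map_poly \<phi> (p + q) = map_poly \<phi> p + map_poly \<phi> q"
  using assms by (intro poly_eqI) (simp add: coeff_map_poly homr_def polyin_def)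

lemma map_poly_diff_on: assumes "homr R \<phi>" "subr R" "polyin R p" "polyin R q"
  shows "map_poly \<phi> (p - q) = map_poly \<phi> p - map_poly \<phi> q"
  using assms by (intro poly_eqI) (simp add: coeff_map_poly homr_diff homrD polyin_def)

lemma map_poly_mult_on: assumes "homr R \<phi>" "subr R" "polyin R p" "polyin R q"
  shows "map_poly \<phi> (p * q) = map_poly \<phi> p * map_poly \<phi> q"
proof (intro poly_eqI)
  fix n
  have "poly.coeff (map_poly \<phi> (p * q)) n = \<phi> (\<Sum>i\<le>n. poly.coeff p i * poly.coeff q (n - i))"
    using assms by (simp add: coeff_map_poly homrD coeff_mult)
  also have "\<dots> = (\<Sum>i\<le>n. \<phi> (poly.coeff p i * poly.coeff q (n - i)))"
    using assms by (intro homr_sum(1)) (auto simp: polyin_def subrD)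
  also have "\<dots> = (\<Sum>i\<le>n. \<phi> (poly.coeff p i) * \<phi> (poly.coeff q (n - i)))"
    using assms by (intro sum.cong refl homrD(4)) (auto simp: polyin_def)
  also have "\<dots> = poly.coeff (map_poly \<phi> p * map_poly \<phi> q) n"
    using assms by (simp add: coeff_map_poly homrD coeff_mult)
  finally show "poly.coeff (map_poly \<phi> (p * q)) n = poly.coeff (map_poly \<phi> p * map_poly \<phi> q) n" .
qed

lemma poly_in_subr: assumes "subr R" "polyin R p" "x \<in> R" shows "poly p x \<in> R"
  using assms unfolding poly_altdef polyin_def by (intro homr_sum(2)[of R id]) (auto simp: subrD homr_def)

lemma poly_altdef_le: fixes p :: "'a::field poly" assumes "Polynomial.degree p \<le> n"
  shows "poly p x = (\<Sum>i\<le>n. poly.coeff p i * x ^ i)"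
proof -
  have "poly p x = poly (\<Sum>i\<le>n. Polynomial.monom (poly.coeff p i) i) x"
    using poly_as_sum_of_monoms'[OF assms] by simp
  also have "\<dots> = (\<Sum>i\<le>n. poly.coeff p i * x ^ i)" by (simp add: poly_sum Polynomial.poly_monom)
  finally show ?thesis .
qed

lemma homr_poly: assumes "homr R \<phi>" "subr R" "polyin R p" "x \<in> R"
  shows "\<phi> (poly p x) = poly (map_poly \<phi> p) (\<phi> x)"
proof -
  have "\<phi> (poly p x) = (\<Sum>i\<le>Polynomial.degree p. \<phi> (poly.coeff p i * x ^ i))"
    unfolding poly_altdef using assms by (intro homr_sum(1)) (auto simp: polyin_def subrD)
  also have "\<dots> = (\<Sum>i\<le>Polynomial.degree p. \<phi> (poly.coeff p i) * \<phi> x ^ i)"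
    using assms by (intro sum.cong refl) (auto simp: polyin_def subrD homrD homr_power)
  also have "\<dots> = poly (map_poly \<phi> p) (\<phi> x)"
  proof -
    have "poly (map_poly \<phi> p) (\<phi> x) = (\<Sum>i\<le>Polynomial.degree p. poly.coeff (map_poly \<phi> p) i * \<phi> x ^ i)"
      by (intro poly_altdef_le map_poly_degree_leq)
    then show ?thesis using assms by (simp add: coeff_map_poly homrD)
  qed
  finally show ?thesis .
qed

locale rh =
  fixes \<iota> :: "'c::field \<Rightarrow> 'k::field"
  assumes rh: "ring_hom_fn \<iota>"
begin

lemma add[simp]: "\<iota> (x + y) = \<iota> x + \<iota> y" and mult[simp]: "\<iota> (x * y) = \<iota> x * \<iota> y"
  and one[simp]: "\<iota> 1 = 1"
  using rh unfolding ring_hom_fn_def by blast+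

lemma zero[simp]: "\<iota> 0 = 0"
proof -
  have "\<iota> 0 = \<iota> 0 + \<iota> 0" using add[of 0 0] by simp
  then show ?thesis by (metis add_cancel_right_right)
qed

lemma uminus[simp]: "\<iota> (- x) = - \<iota> x"
proof -
  have "\<iota> x + \<iota> (- x) = 0" using add[of x "-x"] by simp
  then show ?thesis by (simp add: eq_neg_iff_add_eq_0 add.commute)
qed

lemma diff[simp]: "\<iota> (x - y) = \<iota> x - \<iota> y"
  using add[of x "-y"] by simp

lemma eq_iff[simp]: "\<iota> x = \<iota> y \<longleftrightarrow> x = y"
proof
  assume "\<iota> x = \<iota> y"
  show "x = y"
  proof (rule ccontr)
    assume "x \<noteq> y"
    then have "\<iota> ((x - y) * inverse (x - y)) = 1" by simp
    then have "\<iota> (x - y) * \<iota> (inverse (x - y)) = 1" by (simp only: mult)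
    then show False using \<open>\<iota> x = \<iota> y\<close> by (simp only: diff) simp
  qed
qed simp

lemma eq_0_iff[simp]: "\<iota> x = 0 \<longleftrightarrow> x = 0"
  using eq_iff[of x 0] by simp

lemma power[simp]: "\<iota> (x ^ n) = \<iota> x ^ n"
  by (induction n) auto

lemma inverse[simp]: "\<iota> (inverse x) = inverse (\<iota> x)"
proof (cases "x = 0")
  case False
  then have "\<iota> (x * inverse x) = 1" by simp
  then have "\<iota> x * \<iota> (inverse x) = 1" by (simp only: mult)
  then show ?thesis by (metis inverse_unique)
qed simp

lemma divide[simp]: "\<iota> (x / y) = \<iota> x / \<iota> y"
  by (simp add: divide_inverse)

lemma homr_univ: "homr UNIV \<iota>" by (simp add: homr_def)

lemma map_poly_add[simp]: "map_poly \<iota> (p + q) = map_poly \<iota> p + map_poly \<iota> q"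
  by (rule map_poly_add_on[OF homr_univ]) (auto simp: polyin_def)
lemma map_poly_diff[simp]: "map_poly \<iota> (p - q) = map_poly \<iota> p - map_poly \<iota> q"
  by (intro poly_eqI) (simp add: coeff_map_poly)
lemma map_poly_mult[simp]: "map_poly \<iota> (p * q) = map_poly \<iota> p * map_poly \<iota> q"
  by (rule map_poly_mult_on[OF homr_univ]) (auto simp: polyin_def subr_def)
lemma map_poly_eq_0[simp]: "map_poly \<iota> p = 0 \<longleftrightarrow> p = 0"
  by (simp add: map_poly_eq_0_iff)
lemma degree_map[simp]: "Polynomial.degree (map_poly \<iota> p) = Polynomial.degree p"
  by (rule degree_map_poly) simp

lemma poly_map_altdef: "poly (map_poly \<iota> p) x = (\<Sum>i\<le>Polynomial.degree p. \<iota> (poly.coeff p i) * x ^ i)"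
  by (simp add: poly_altdef coeff_map_poly)

sublocale vs: vector_space "\<lambda>c x. \<iota> c * x"
  by unfold_locales (simp_all add: algebra_simps)

abbreviation "Alg \<equiv> rel_alg_closure \<iota>"

lemma AlgI: "p \<noteq> 0 \<Longrightarrow> poly (map_poly \<iota> p) x = 0 \<Longrightarrow> x \<in> Alg"
  unfolding rel_alg_closure_def by blast

lemma const_Alg: "\<iota> c \<in> Alg"
  by (rule AlgI[of "[:- c, 1:]"]) (auto simp: map_poly_pCons)

lemma mult_span: assumes "v \<in> vs.span Xs" "\<And>b. b \<in> Xs \<Longrightarrow> a * b \<in> vs.span Ys"
  shows "a * v \<in> vs.span Ys"
  using assms(1)
proof (induction rule: vs.span_induct_alt)
  case base then show ?case by (simp add: vs.span_zero)
next
  case (step c x y)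
  have "a * (\<iota> c * x + y) = \<iota> c * (a * x) + a * y" by (simp add: algebra_simps)
  then show ?case using step assms(2) by (simp add: vs.span_add vs.span_scale)
qed

lemma prod_span: assumes "u \<in> vs.span Xs" "v \<in> vs.span Ys"
  shows "u * v \<in> vs.span ((\<lambda>(a, b). a * b) ` (Xs \<times> Ys))"
proof -
  have "x * v \<in> vs.span ((\<lambda>(a, b). a * b) ` (Xs \<times> Ys))" if "x \<in> Xs" for x
    by (rule mult_span[OF assms(2)]) (use that in \<open>auto intro!: vs.span_base\<close>)
  then have "v * u \<in> vs.span ((\<lambda>(a, b). a * b) ` (Xs \<times> Ys))"
    by (intro mult_span[OF assms(1)]) (simp add: mult.commute)
  then show ?thesis by (simp add: mult.commute)
qed

lemma poly_map_root_degree: assumes "p \<noteq> 0" "poly (map_poly \<iota> p) x = 0"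
  shows "Polynomial.degree p > 0"
proof (rule ccontr)
  assume "\<not> ?thesis"
  then obtain c where "p = [:c:]" by (metis degree_eq_zeroE neq0_conv)
  then show False using assms by (simp add: map_poly_pCons)
qed

lemma alg_pow_span: assumes "x \<in> Alg"
  obtains d where "d > 0" "\<And>n. x ^ n \<in> vs.span ((\<lambda>i. x ^ i) ` {..<d})"
proof -
  obtain p where p: "p \<noteq> 0" "poly (map_poly \<iota> p) x = 0"
    using assms unfolding rel_alg_closure_def by blast
  define d where "d = Polynomial.degree p"
  define P where "P = (\<lambda>i. x ^ i) ` {..<d}"
  have d0: "d > 0" using poly_map_root_degree[OF p] by (simp add: d_def)
  have c: "poly.coeff p d \<noteq> 0" using p by (simp add: d_def)
  have "0 = (\<Sum>i\<le>d. \<iota> (poly.coeff p i) * x ^ i)" using p(2) by (simp add: poly_map_altdef d_def)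
  also have "\<dots> = \<iota> (poly.coeff p d) * x ^ d + (\<Sum>i<d. \<iota> (poly.coeff p i) * x ^ i)"
    by (simp add: lessThan_Suc_atMost[symmetric] add.commute)
  finally have eqd: "x ^ d = (\<Sum>i<d. \<iota> (- poly.coeff p i / poly.coeff p d) * x ^ i)"
    using c by (simp add: sum_divide_distrib[symmetric] field_simps sum_negf eq_neg_iff_add_eq_0 flip: sum_distrib_left)
  have "(\<Sum>i<d. \<iota> (- poly.coeff p i / poly.coeff p d) * x ^ i) \<in> vs.span P"
    unfolding P_def by (intro vs.span_sum vs.span_scale vs.span_base) auto
  then have xd: "x ^ d \<in> vs.span P" by (subst eqd)
  have "x ^ n \<in> vs.span P" for n
  proof (induction n)
    case 0
    have "x ^ 0 \<in> P" using d0 unfolding P_def by blast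
    then show ?case by (rule vs.span_base)
  next
    case (Suc n)
    have "x * x ^ n \<in> vs.span P"
    proof (rule mult_span[OF Suc])
      fix b assume "b \<in> P"
      then obtain i where i: "i < d" "b = x ^ i" unfolding P_def by auto
      show "x * b \<in> vs.span P"
      proof (cases "Suc i < d")
        case True
        then have "x ^ Suc i \<in> P" unfolding P_def by blast
        then show ?thesis using i by (simp add: vs.span_base)
      next
        case False then have "Suc i = d" using i by simp
        then show ?thesis using xd i by (metis power_Suc)
      qed
    qed
    then show ?case by simp
  qed
  then show ?thesis using that d0 unfolding P_def by blast
qed

end

inductive_set gen :: "('c::field \<Rightarrow> 'k::field) \<Rightarrow> 'k set \<Rightarrow> 'k set"
  for \<iota> :: "'c::field \<Rightarrow> 'k::field" and S :: "'k set" where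
  gen_const: "\<iota> c \<in> gen \<iota> S"
| gen_base: "s \<in> S \<Longrightarrow> s \<in> gen \<iota> S"
| gen_add: "x \<in> gen \<iota> S \<Longrightarrow> y \<in> gen \<iota> S \<Longrightarrow> x + y \<in> gen \<iota> S"
| gen_mult: "x \<in> gen \<iota> S \<Longrightarrow> y \<in> gen \<iota> S \<Longrightarrow> x * y \<in> gen \<iota> S"

lemma gen_mono: "S \<subseteq> T \<Longrightarrow> gen \<iota> S \<subseteq> gen \<iota> T"
proof
  fix x assume st: "S \<subseteq> T" and "x \<in> gen \<iota> S"
  from \<open>x \<in> gen \<iota> S\<close> show "x \<in> gen \<iota> T"
    by (induction rule: gen.induct) (use st in \<open>auto intro: gen.intros\<close>)
qed

lemma gen_minimal: assumes "\<And>c. \<iota> c \<in> R" "S \<subseteq> R"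
  "\<And>x y. x \<in> R \<Longrightarrow> y \<in> R \<Longrightarrow> x + y \<in> R" "\<And>x y. x \<in> R \<Longrightarrow> y \<in> R \<Longrightarrow> x * y \<in> R"
  shows "gen \<iota> S \<subseteq> R"
proof
  fix x assume "x \<in> gen \<iota> S" then show "x \<in> R"
    by (induction rule: gen.induct) (use assms in auto)
qed

context rh begin

lemma subr_gen: "subr (gen \<iota> S)"
proof -
  have "0 \<in> gen \<iota> S" using gen_const[of \<iota> 0 S] by simp
  moreover have "1 \<in> gen \<iota> S" using gen_const[of \<iota> 1 S] by simp
  moreover have "- x \<in> gen \<iota> S" if "x \<in> gen \<iota> S" for x
    using gen_mult[OF gen_const[of \<iota> "-1"] that] by simp
  ultimately show ?thesis unfolding subr_def by (auto intro: gen.intros)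
qed

lemma gen_absorb: "y \<in> gen \<iota> S \<Longrightarrow> gen \<iota> (insert y S) = gen \<iota> S"
  by (rule antisym[OF gen_minimal gen_mono]) (auto intro: gen.intros)

lemma gen_pow: "x \<in> gen \<iota> S \<Longrightarrow> x ^ n \<in> gen \<iota> S"
  using subrD(7)[OF subr_gen] .

lemma fin_span: assumes "finite S" "S \<subseteq> Alg"
  shows "\<exists>B. finite B \<and> 1 \<in> vs.span B \<and> (\<forall>u\<in>vs.span B. \<forall>v\<in>vs.span B. u * v \<in> vs.span B)
            \<and> S \<subseteq> vs.span B"
  using assms
proof (induction S)
  case empty
  have sp: "vs.span {1} = range \<iota>" by (auto simp: vs.span_singleton)
  have "1 \<in> range \<iota>" by (metis one rangeI)
  then show ?case by (intro exI[of _ "{1}"]) (auto simp: sp simp flip: mult)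
next
  case (insert b T)
  then obtain B where B: "finite B" "1 \<in> vs.span B" "\<forall>u\<in>vs.span B. \<forall>v\<in>vs.span B. u * v \<in> vs.span B"
    "T \<subseteq> vs.span B" by auto
  obtain d where d: "d > 0" "\<And>n. b ^ n \<in> vs.span ((\<lambda>i. b ^ i) ` {..<d})"
    using alg_pow_span[of b] insert by auto
  define P where "P = (\<lambda>i. b ^ i) ` {..<d}"
  define B' where "B' = (\<lambda>(a, b). a * b) ` (B \<times> P)"
  have inB': "u * v \<in> vs.span B'" if "u \<in> vs.span B" "v \<in> vs.span P" for u v
    unfolding B'_def by (rule prod_span[OF that])
  have P1: "b ^ n \<in> vs.span P" for n using d(2) unfolding P_def by blast
  have one: "1 \<in> vs.span B'" using inB'[OF B(2) P1[of 0]] by simp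
  have sub: "u \<in> vs.span B'" if "u \<in> vs.span B" for u using inB'[OF that P1[of 0]] by simp
  have bin: "b \<in> vs.span B'" using inB'[OF B(2) P1[of 1]] by simp
  have gen_mul: "g * g' \<in> vs.span B'" if "g \<in> B'" "g' \<in> B'" for g g'
  proof -
    obtain u1 p1 where g: "u1 \<in> B" "p1 \<in> P" "g = u1 * p1" using \<open>g \<in> B'\<close> unfolding B'_def by auto
    obtain u2 p2 where g': "u2 \<in> B" "p2 \<in> P" "g' = u2 * p2" using \<open>g' \<in> B'\<close> unfolding B'_def by auto
    obtain i j where "p1 = b ^ i" "p2 = b ^ j" using g(2) g'(2) unfolding P_def by auto
    then have "g * g' = (u1 * u2) * b ^ (i + j)" using g g' by (simp add: power_add algebra_simps)
    moreover have "u1 * u2 \<in> vs.span B" using B(3) g(1) g'(1) by (auto intro: vs.span_base)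
    ultimately show ?thesis using inB' P1 by simp
  qed
  have closed: "u * v \<in> vs.span B'" if "u \<in> vs.span B'" "v \<in> vs.span B'" for u v
  proof -
    have "g * v \<in> vs.span B'" if "g \<in> B'" for g
      by (rule mult_span[OF \<open>v \<in> vs.span B'\<close>]) (use gen_mul that in auto)
    then have "v * u \<in> vs.span B'"
      by (intro mult_span[OF \<open>u \<in> vs.span B'\<close>]) (simp add: mult.commute)
    then show ?thesis by (simp add: mult.commute)
  qed
  have "finite B'" unfolding B'_def P_def using B(1) by auto
  then show ?case using one closed sub bin B(4) by (intro exI[of _ B']) auto
qed

lemma gen_in_span: assumes "1 \<in> vs.span B" "\<forall>u\<in>vs.span B. \<forall>v\<in>vs.span B. u * v \<in> vs.span B"
  "S \<subseteq> vs.span B" shows "gen \<iota> S \<subseteq> vs.span B"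
proof (rule gen_minimal)
  show "\<iota> c \<in> vs.span B" for c using vs.span_scale[OF assms(1), of c] by simp
qed (use assms in \<open>auto intro: vs.span_add\<close>)

lemma alg_of_span: assumes "finite B" "\<And>n. z ^ n \<in> vs.span B"
  shows "z \<in> Alg"
proof (cases "inj_on (\<lambda>n. z ^ n) {..card B}")
  case False
  then obtain i j where ij: "i \<le> card B" "j \<le> card B" "i \<noteq> j" "z ^ i = z ^ j"
    unfolding inj_on_def by auto
  define q where "q = Polynomial.monom (1::'c) i - Polynomial.monom 1 j"
  have "q \<noteq> 0"
  proof
    assume "q = 0" then have "poly.coeff q i = 0" by simp
    then show False using ij(3) by (simp add: q_def)
  qed
  moreover have "poly (map_poly \<iota> q) z = 0"
    using ij(4) by (simp add: q_def map_poly_monom Polynomial.poly_monom)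
  ultimately show ?thesis by (rule AlgI)
next
  case True
  define P where "P = (\<lambda>n. z ^ n) ` {..card B}"
  have cardP: "card P = Suc (card B)" unfolding P_def using card_image[OF True] by simp
  have "P \<subseteq> vs.span B" unfolding P_def using assms(2) by auto
  then have "vs.dependent P"
    using vs.independent_span_bound[OF assms(1), of P] cardP by auto
  then obtain T u where T: "finite T" "T \<subseteq> P" "(\<Sum>v\<in>T. \<iota> (u v) * v) = 0" "\<exists>v\<in>T. u v \<noteq> 0"
    unfolding vs.dependent_explicit by blast
  define w where "w n = (if z ^ n \<in> T then u (z ^ n) else 0)" for n
  define q where "q = (\<Sum>n\<le>card B. Polynomial.monom (w n) n)"
  have cq: "poly.coeff q n = (if n \<le> card B then w n else 0)" for n
    unfolding q_def by (simp add: coeff_sum Polynomial.coeff_monom)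
  have "q \<noteq> 0"
  proof -
    obtain v where v: "v \<in> T" "u v \<noteq> 0" using T(4) by blast
    then obtain k where k: "k \<le> card B" "v = z ^ k" using T(2) unfolding P_def by auto
    then have "poly.coeff q k \<noteq> 0" using v by (simp add: cq w_def)
    then show ?thesis by auto
  qed
  moreover have "poly (map_poly \<iota> q) z = 0"
  proof -
    have "Polynomial.degree q \<le> card B" using cq by (intro degree_le) auto
    then have "poly (map_poly \<iota> q) z = (\<Sum>n\<le>card B. \<iota> (w n) * z ^ n)"
      by (subst poly_altdef_le[of _ "card B"]) (simp_all add: coeff_map_poly cq)
    also have "\<dots> = (\<Sum>n\<in>{n. n \<le> card B \<and> z ^ n \<in> T}. \<iota> (u (z ^ n)) * z ^ n)"
      by (rule sum.mono_neutral_cong_right) (auto simp: w_def)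
    also have "\<dots> = (\<Sum>v\<in>T. \<iota> (u v) * v)"
    proof (rule sym, rule sum.reindex_cong[of "\<lambda>n. z ^ n"])
      show "inj_on (\<lambda>n. z ^ n) {n. n \<le> card B \<and> z ^ n \<in> T}"
        using True by (rule inj_on_subset) auto
      show "T = (\<lambda>n. z ^ n) ` {n. n \<le> card B \<and> z ^ n \<in> T}"
        using T(2) unfolding P_def by auto
    qed simp
    finally show ?thesis using T(3) by simp
  qed
  ultimately show ?thesis by (rule AlgI)
qed

lemma gen_fin_alg: assumes "finite S" "S \<subseteq> Alg" shows "gen \<iota> S \<subseteq> Alg"
proof
  fix z assume z: "z \<in> gen \<iota> S"
  obtain B where B: "finite B" "1 \<in> vs.span B" "\<forall>u\<in>vs.span B. \<forall>v\<in>vs.span B. u * v \<in> vs.span B"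
    "S \<subseteq> vs.span B" using fin_span[OF assms] by auto
  have "z ^ n \<in> vs.span B" for n using gen_in_span[OF B(2-4)] gen_pow[OF z] by auto
  then show "z \<in> Alg" by (rule alg_of_span[OF B(1)])
qed

lemma Alg_add: "x \<in> Alg \<Longrightarrow> y \<in> Alg \<Longrightarrow> x + y \<in> Alg"
  using gen_fin_alg[of "{x, y}"] by (auto intro: gen.intros)
lemma Alg_mult: "x \<in> Alg \<Longrightarrow> y \<in> Alg \<Longrightarrow> x * y \<in> Alg"
  using gen_fin_alg[of "{x, y}"] by (auto intro: gen.intros)

lemma gen_alg: assumes "S \<subseteq> Alg" shows "gen \<iota> S \<subseteq> Alg"
  by (rule gen_minimal) (use assms const_Alg Alg_add Alg_mult in auto)

lemma subr_Alg: "subr Alg"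
  unfolding subr_def using const_Alg[of 0] const_Alg[of 1] const_Alg[of "-1"] Alg_add Alg_mult
  by (auto, metis mult_minus1 uminus one)

end

fun tm_of_list :: "'c list \<Rightarrow> 'c tm" where
  "tm_of_list [] = Zero"
| "tm_of_list (c # cs) = Add (Const c) (Mul Var (tm_of_list cs))"

definition tm_of_poly :: "'c::zero poly \<Rightarrow> 'c tm" where
  "tm_of_poly p = tm_of_list (coeffs p)"

primrec poly_of_tm :: "'c::comm_ring_1 tm \<Rightarrow> 'c poly" where
  "poly_of_tm Var = [:0, 1:]"
| "poly_of_tm (Const c) = [:c:]"
| "poly_of_tm Zero = 0"
| "poly_of_tm One = 1"
| "poly_of_tm (Add s t) = poly_of_tm s + poly_of_tm t"
| "poly_of_tm (Sub s t) = poly_of_tm s - poly_of_tm t"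
| "poly_of_tm (Minus s) = - poly_of_tm s"
| "poly_of_tm (Mul s t) = poly_of_tm s * poly_of_tm t"

primrec tpow :: "nat \<Rightarrow> 'c tm" where
  "tpow 0 = One"
| "tpow (Suc n) = Mul Var (tpow n)"

lemma tval_tpow: "tval \<iota> a (tpow n) = a ^ n"
  by (induction n) auto

primrec qatoms :: "'c qf \<Rightarrow> ('c tm \<times> 'c tm) set" where
  "qatoms QTrue = {}"
| "qatoms QFalse = {}"
| "qatoms (QEq s t) = {(s, t)}"
| "qatoms (QNot p) = qatoms p"
| "qatoms (QAnd p q) = qatoms p \<union> qatoms q"
| "qatoms (QOr p q) = qatoms p \<union> qatoms q"
| "qatoms (QImp p q) = qatoms p \<union> qatoms q"

lemma finite_qatoms: "finite (qatoms p)"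
  by (induction p) auto

lemma qval_atoms_cong:
  assumes "\<And>s t. (s, t) \<in> qatoms p \<Longrightarrow> (tval \<iota>1 a s = tval \<iota>1 a t) = (tval \<iota>2 b s = tval \<iota>2 b t)"
  shows "qval \<iota>1 a p = qval \<iota>2 b p"
  using assms by (induction p) auto

lemma tval_closed: "tm_closed t \<Longrightarrow> rh \<iota> \<Longrightarrow> tval \<iota> a t = \<iota> (tval (\<lambda>c. c) 0 t)"
  by (induction t) (auto simp: rh.add rh.mult rh.zero rh.one rh.diff rh.uminus)

lemma qval_closed: "qf_closed p \<Longrightarrow> rh \<iota> \<Longrightarrow> qval \<iota> a p = qval (\<lambda>c. c) 0 p"
  by (induction p) (auto simp: tval_closed rh.eq_iff)

context rh begin

lemma map_poly_uminus[simp]: "map_poly \<iota> (- p) = - map_poly \<iota> p"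
  by (intro poly_eqI) (simp add: coeff_map_poly)

lemma tval_tm_of_list: "tval \<iota> a (tm_of_list cs) = poly (map_poly \<iota> (Poly cs)) a"
  by (induction cs) (auto simp: map_poly_pCons)

lemma tval_tm_of_poly: "tval \<iota> a (tm_of_poly p) = poly (map_poly \<iota> p) a"
  by (simp add: tm_of_poly_def tval_tm_of_list)

lemma tval_poly_of_tm: "tval \<iota> a t = poly (map_poly \<iota> (poly_of_tm t)) a"
  by (induction t) (auto simp: map_poly_pCons)

lemma pow_eq_Alg: assumes "z ^ i = z ^ j" "i \<noteq> j" shows "z \<in> Alg"
proof -
  define q where "q = Polynomial.monom (1::'c) i - Polynomial.monom 1 j"
  have "q \<noteq> 0"
  proof
    assume "q = 0" then have "poly.coeff q i = 0" by simp
    then show False using assms(2) by (simp add: q_def)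
  qed
  moreover have "poly (map_poly \<iota> q) z = 0"
    using assms(1) by (simp add: q_def map_poly_monom Polynomial.poly_monom)
  ultimately show ?thesis by (rule AlgI)
qed

lemma finite_Alg: assumes "finite (UNIV :: 'k set)" shows "z \<in> Alg"
proof -
  have "\<not> inj (\<lambda>n::nat. z ^ n)"
    using assms infinite_UNIV_nat finite_imageD[of "\<lambda>n::nat. z ^ n" UNIV] by (metis finite_subset top_greatest)
  then obtain i j where "z ^ i = z ^ j" "i \<noteq> j" unfolding inj_def by blast
  then show ?thesis by (rule pow_eq_Alg)
qed

end

lemma homr_emb: assumes "rh \<iota>K" "rh \<iota>L" "embedding_over \<iota>K \<iota>L (rel_alg_closure \<iota>K) \<sigma>"
  shows "homr (rel_alg_closure \<iota>K) \<sigma>"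
proof -
  have "\<sigma> 0 = 0" using assms(3) unfolding embedding_over_def
    by (metis assms(1,2) rh.zero)
  then show ?thesis using assms(3) unfolding embedding_over_def homr_def by auto
qed

lemma tval_emb: assumes "rh \<iota>K" "rh \<iota>L" "embedding_over \<iota>K \<iota>L (rel_alg_closure \<iota>K) \<sigma>"
  "a \<in> rel_alg_closure \<iota>K"
  shows "tval \<iota>K a t \<in> rel_alg_closure \<iota>K \<and> tval \<iota>L (\<sigma> a) t = \<sigma> (tval \<iota>K a t)"
proof -
  interpret K: rh \<iota>K by fact
  interpret L: rh \<iota>L by fact
  have H: "homr K.Alg \<sigma>" by (rule homr_emb[OF assms(1-3)])
  have C: "\<sigma> (\<iota>K c) = \<iota>L c" for c using assms(3) unfolding embedding_over_def by auto
  show ?thesis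
  proof (induction t)
    case Var then show ?case using assms(4) by simp
  next
    case (Const c) then show ?case using C K.const_Alg by simp
  next
    case Zero then show ?case using homrD[OF H] subrD[OF K.subr_Alg] by simp
  next
    case One then show ?case using homrD[OF H] subrD[OF K.subr_Alg] by simp
  next
    case (Add s t) then show ?case using homrD[OF H] subrD[OF K.subr_Alg] by simp
  next
    case (Sub s t) then show ?case using homr_diff[OF H K.subr_Alg] subrD[OF K.subr_Alg] by simp
  next
    case (Minus s) then show ?case using homr_uminus[OF H K.subr_Alg] subrD[OF K.subr_Alg] by simp
  next
    case (Mul s t) then show ?case using homrD[OF H] subrD[OF K.subr_Alg] by simp
  qed
qed

lemma dir21:
  fixes \<iota>K :: "'c::field \<Rightarrow> 'k::field" and \<iota>L :: "'c \<Rightarrow> 'l::field"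
  assumes "ring_hom_fn \<iota>K" "ring_hom_fn \<iota>L"
    "embedding_over \<iota>K \<iota>L (rel_alg_closure \<iota>K) \<sigma>"
    "infinite (UNIV :: 'k set) \<longrightarrow> infinite (UNIV :: 'l set)"
  shows "Th_ex1 \<iota>K \<subseteq> Th_ex1 \<iota>L"
proof -
  interpret K: rh \<iota>K by (unfold_locales) fact
  interpret L: rh \<iota>L by (unfold_locales) fact
  have rK: "rh \<iota>K" and rL: "rh \<iota>L" by unfold_locales
  have inj: "inj_on \<sigma> K.Alg" using assms(3) unfolding embedding_over_def by auto
  have ex: "\<exists>b. qval \<iota>L b p" if "qval \<iota>K a p" for a p
  proof (cases "a \<in> K.Alg")
    case True
    have "qval \<iota>K a p = qval \<iota>L (\<sigma> a) p"
    proof (rule qval_atoms_cong)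
      fix s t
      show "(tval \<iota>K a s = tval \<iota>K a t) = (tval \<iota>L (\<sigma> a) s = tval \<iota>L (\<sigma> a) t)"
        using tval_emb[OF rK rL assms(3) True, of s] tval_emb[OF rK rL assms(3) True, of t]
          inj by (auto dest: inj_onD)
    qed
    then show ?thesis using that by blast
  next
    case False
    then have "infinite (UNIV :: 'k set)" using K.finite_Alg by blast
    then have infL: "infinite (UNIV :: 'l set)" using assms(4) by blast
    define Z where "Z = (\<Union>(s, t)\<in>qatoms p. if poly_of_tm s = poly_of_tm t then {}
       else {z. poly (map_poly \<iota>L (poly_of_tm s - poly_of_tm t)) z = 0})"
    have "finite Z" unfolding Z_def using finite_qatoms[of p]
      by (auto intro!: poly_roots_finite simp del: L.map_poly_diff)
    then obtain b where b: "b \<notin> Z" using ex_new_if_finite[OF infL] by blast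
    have "qval \<iota>K a p = qval \<iota>L b p"
    proof (rule qval_atoms_cong)
      fix s t assume st: "(s, t) \<in> qatoms p"
      show "(tval \<iota>K a s = tval \<iota>K a t) = (tval \<iota>L b s = tval \<iota>L b t)"
      proof (cases "poly_of_tm s = poly_of_tm t")
        case True then show ?thesis by (simp add: K.tval_poly_of_tm L.tval_poly_of_tm)
      next
        case ne: False
        have "tval \<iota>L b s \<noteq> tval \<iota>L b t"
          using b st ne unfolding Z_def by (auto simp: L.tval_poly_of_tm)
        moreover have "tval \<iota>K a s \<noteq> tval \<iota>K a t"
        proof
          assume "tval \<iota>K a s = tval \<iota>K a t"
          then have "poly (map_poly \<iota>K (poly_of_tm s - poly_of_tm t)) a = 0"
            by (simp add: K.tval_poly_of_tm)
          then have "a \<in> K.Alg" using ne by (intro K.AlgI[of "poly_of_tm s - poly_of_tm t"]) auto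
          then show False using False by blast
        qed
        ultimately show ?thesis by blast
      qed
    qed
    then show ?thesis using that by blast
  qed
  have "ex1_holds \<iota>L \<phi>" if "ex1_wf \<phi>" "ex1_holds \<iota>K \<phi>" for \<phi>
    using that
  proof (induction \<phi>)
    case (ExS p) then show ?case using ex by auto
  next
    case (QfS p) then show ?case using qval_closed[OF _ rK] qval_closed[OF _ rL] by auto
  qed auto
  then show ?thesis unfolding Th_ex1_def by blast
qed

lemma dir12b:
  fixes \<iota>K :: "'c::field \<Rightarrow> 'k::field" and \<iota>L :: "'c \<Rightarrow> 'l::field"
  assumes "ring_hom_fn \<iota>K" "ring_hom_fn \<iota>L" "Th_ex1 \<iota>K \<subseteq> Th_ex1 \<iota>L"
    "infinite (UNIV :: 'k set)"
  shows "infinite (UNIV :: 'l set)"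
proof
  assume fin: "finite (UNIV :: 'l set)"
  define n where "n = card (UNIV :: 'l set)"
  define N where "N = n + fact n"
  have allL: "b ^ N = b ^ n" for b :: 'l
  proof -
    have "\<not> inj_on (\<lambda>k. b ^ k) {..n}"
    proof
      assume "inj_on (\<lambda>k. b ^ k) {..n}"
      then have "card {..n} \<le> card (UNIV :: 'l set)"
        using card_inj_on_le[of "\<lambda>k. b ^ k" "{..n}" UNIV] fin by auto
      then show False by (simp add: n_def)
    qed
    then obtain i j where ij: "i < j" "j \<le> n" "b ^ i = b ^ j"
      unfolding inj_on_def by (metis atMost_iff linorder_neqE_nat)
    have per: "b ^ (i + m * (j - i)) = b ^ i" for m
    proof (induction m)
      case (Suc m)
      have e: "i + Suc m * (j - i) = (i + m * (j - i)) + (j - i)" by simp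
      have "b ^ (i + Suc m * (j - i)) = b ^ (i + m * (j - i)) * b ^ (j - i)"
        by (simp only: e power_add)
      also have "\<dots> = b ^ i * b ^ (j - i)" using Suc.IH by simp
      also have "\<dots> = b ^ (i + (j - i))" by (simp only: power_add)
      also have "i + (j - i) = j" using ij by simp
      finally show ?case using ij by simp
    qed simp
    have "(j - i) dvd fact n" using ij by (intro dvd_fact) auto
    then obtain m where m: "fact n = m * (j - i)" by (metis dvd_def mult.commute)
    have "b ^ N = b ^ (n - i) * b ^ (i + m * (j - i))"
      unfolding N_def using ij by (simp flip: power_add m)
    also have "\<dots> = b ^ (n - i) * b ^ i" by (simp only: per)
    also have "\<dots> = b ^ (n - i + i)" by (simp only: power_add)
    also have "n - i + i = n" using ij by simp
    finally show ?thesis .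
  qed
  define \<phi> :: "'c ex1" where "\<phi> = ExS (QNot (QEq (tpow N) (tpow n)))"
  interpret K: rh \<iota>K by (unfold_locales) fact
  have "\<exists>a::'k. a ^ N \<noteq> a ^ n"
  proof -
    define q :: "'k poly" where "q = Polynomial.monom 1 N - Polynomial.monom 1 n"
    have "N \<noteq> n" unfolding N_def by simp
    then have "q \<noteq> 0" unfolding q_def
      by (metis add_0 coeff_diff coeff_monom diff_add_cancel zero_neq_one)
    then have "finite {a. poly q a = 0}" by (rule poly_roots_finite)
    then obtain a where "poly q a \<noteq> 0" using ex_new_if_finite[OF assms(4)] by blast
    then show ?thesis by (auto simp: q_def Polynomial.poly_monom)
  qed
  then have "\<phi> \<in> Th_ex1 \<iota>K" unfolding \<phi>_def Th_ex1_def by (simp add: tval_tpow)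
  then have "\<phi> \<in> Th_ex1 \<iota>L" using assms(3) by blast
  then show False using allL unfolding \<phi>_def Th_ex1_def by (simp add: tval_tpow)
qed

definition homC :: "('c \<Rightarrow> 'k::field) \<Rightarrow> ('c \<Rightarrow> 'm::field) \<Rightarrow> 'k set \<Rightarrow> ('k \<Rightarrow> 'm) \<Rightarrow> bool" where
  "homC \<iota>K \<iota>M R \<phi> \<longleftrightarrow> (\<forall>x\<in>R. \<forall>y\<in>R. \<phi> (x + y) = \<phi> x + \<phi> y \<and> \<phi> (x * y) = \<phi> x * \<phi> y) \<and>
     (\<forall>c. \<phi> (\<iota>K c) = \<iota>M c)"

lemma degree_less_if_coeff: fixes p :: "'a::zero poly"
  assumes "Polynomial.degree p \<le> n" "poly.coeff p n = 0" "n > 0"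
  shows "Polynomial.degree p < n"
proof (rule ccontr)
  assume "\<not> ?thesis"
  then have "Polynomial.degree p = n" using assms(1) by simp
  then have "p = 0" using assms(2) leading_coeff_0_iff by metis
  then show False using \<open>Polynomial.degree p = n\<close> assms(3) by simp
qed

context rh begin

lemma min_poly_ex: assumes "x \<in> Alg"
  shows "\<exists>p. p \<noteq> 0 \<and> poly (map_poly \<iota> p) x = 0 \<and>
     (\<forall>q. q \<noteq> 0 \<and> poly (map_poly \<iota> q) x = 0 \<longrightarrow> Polynomial.degree p \<le> Polynomial.degree q)"
proof -
  obtain p where "p \<noteq> 0" "poly (map_poly \<iota> p) x = 0" using assms unfolding rel_alg_closure_def by blast
  then show ?thesis using ex_has_least_nat[of "\<lambda>p. p \<noteq> 0 \<and> poly (map_poly \<iota> p) x = 0" p Polynomial.degree]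
    by blast
qed

definition minp :: "'k \<Rightarrow> 'c poly" where
  "minp x = (SOME p. p \<noteq> 0 \<and> poly (map_poly \<iota> p) x = 0 \<and>
     (\<forall>q. q \<noteq> 0 \<and> poly (map_poly \<iota> q) x = 0 \<longrightarrow> Polynomial.degree p \<le> Polynomial.degree q))"

lemma minp: assumes "x \<in> Alg"
  shows "minp x \<noteq> 0" "poly (map_poly \<iota> (minp x)) x = 0"
    "\<And>q. q \<noteq> 0 \<Longrightarrow> poly (map_poly \<iota> q) x = 0 \<Longrightarrow> Polynomial.degree (minp x) \<le> Polynomial.degree q"
  using someI_ex[OF min_poly_ex[OF assms]] unfolding minp_def[symmetric] by blast+

lemma minp_dvd: assumes "x \<in> Alg" "poly (map_poly \<iota> g) x = 0" shows "minp x dvd g"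
proof (rule ccontr)
  assume nd: "\<not> minp x dvd g"
  define r where "r = g mod minp x"
  have "r \<noteq> 0" using nd unfolding r_def by (simp add: mod_eq_0_iff_dvd)
  have dl: "Polynomial.degree r < Polynomial.degree (minp x)"
    unfolding r_def using degree_mod_less_degree[OF minp(1)[OF assms(1)] nd] .
  have "g = g div minp x * minp x + r" unfolding r_def by (metis div_mult_mod_eq)
  then have "map_poly \<iota> g = map_poly \<iota> (g div minp x) * map_poly \<iota> (minp x) + map_poly \<iota> r"
    by (metis map_poly_add map_poly_mult)
  then have "poly (map_poly \<iota> r) x = 0" using assms minp(2)[OF assms(1)]
    by (metis add_0 mult_zero_right poly_add poly_mult)
  then show False using minp(3)[OF assms(1) \<open>r \<noteq> 0\<close>] dl by simp
qed

lemma minp_coeff0: assumes "x \<in> Alg" "x \<noteq> 0" shows "poly.coeff (minp x) 0 \<noteq> 0"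
proof
  assume c0: "poly.coeff (minp x) 0 = 0"
  obtain q where q: "minp x = pCons 0 q" using c0 by (metis pCons_cases coeff_pCons_0)
  have "q \<noteq> 0" using q minp(1)[OF assms(1)] by auto
  have "poly (map_poly \<iota> (minp x)) x = x * poly (map_poly \<iota> q) x"
    using q by (simp add: map_poly_pCons)
  then have "poly (map_poly \<iota> q) x = 0" using minp(2)[OF assms(1)] assms(2) by simp
  then have "Polynomial.degree (minp x) \<le> Polynomial.degree q" using minp(3)[OF assms(1) \<open>q \<noteq> 0\<close>] by blast
  moreover have "Polynomial.degree (minp x) = Suc (Polynomial.degree q)" using q \<open>q \<noteq> 0\<close> by simp
  ultimately show False by simp
qed

lemma gen_single: "gen \<iota> {x} = {poly (map_poly \<iota> g) x | g. True}"
proof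
  show "gen \<iota> {x} \<subseteq> {poly (map_poly \<iota> g) x | g. True}"
  proof (rule gen_minimal)
    show "\<iota> c \<in> {poly (map_poly \<iota> g) x | g. True}" for c
      by (rule CollectI, rule exI[of _ "[:c:]"]) (simp add: map_poly_pCons)
    show "{x} \<subseteq> {poly (map_poly \<iota> g) x | g. True}"
      by (auto intro!: exI[of _ "[:0, 1:]"] simp: map_poly_pCons)
    show "u + v \<in> {poly (map_poly \<iota> g) x | g. True}" if uv: "u \<in> {poly (map_poly \<iota> g) x | g. True}"
      "v \<in> {poly (map_poly \<iota> g) x | g. True}" for u v
    proof -
      obtain g h where "u = poly (map_poly \<iota> g) x" "v = poly (map_poly \<iota> h) x" using uv by blast
      then show ?thesis by (intro CollectI exI[of _ "g + h"]) simp
    qed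
    show "u * v \<in> {poly (map_poly \<iota> g) x | g. True}" if uv: "u \<in> {poly (map_poly \<iota> g) x | g. True}"
      "v \<in> {poly (map_poly \<iota> g) x | g. True}" for u v
    proof -
      obtain g h where "u = poly (map_poly \<iota> g) x" "v = poly (map_poly \<iota> h) x" using uv by blast
      then show ?thesis by (intro CollectI exI[of _ "g * h"]) simp
    qed
  qed
  show "{poly (map_poly \<iota> g) x | g. True} \<subseteq> gen \<iota> {x}"
  proof clarify
    fix g
    show "poly (map_poly \<iota> g) x \<in> gen \<iota> {x}"
      by (rule poly_in_subr[OF subr_gen]) (auto simp: polyin_def coeff_map_poly intro: gen.intros)
  qed
qed

end

locale rh2 = K: rh \<iota>K + M: rh \<iota>M
  for \<iota>K :: "'c::field \<Rightarrow> 'k::field" and \<iota>M :: "'c \<Rightarrow> 'm::field"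
begin

lemma homC_homr: assumes "homC \<iota>K \<iota>M R \<phi>" shows "homr R \<phi>"
proof -
  have "\<phi> 0 = 0" "\<phi> 1 = 1" using assms unfolding homC_def by (metis K.zero M.zero K.one M.one)+
  then show ?thesis using assms unfolding homC_def homr_def by auto
qed

lemma homC_poly: assumes "homC \<iota>K \<iota>M R \<phi>" "subr R" "range \<iota>K \<subseteq> R" "x \<in> R"
  shows "\<phi> (poly (map_poly \<iota>K p) x) = poly (map_poly \<iota>M p) (\<phi> x)"
proof -
  have "polyin R (map_poly \<iota>K p)" using assms(3) by (auto simp: polyin_def coeff_map_poly)
  then have "\<phi> (poly (map_poly \<iota>K p) x) = poly (map_poly \<phi> (map_poly \<iota>K p)) (\<phi> x)"
    by (rule homr_poly[OF homC_homr[OF assms(1)] assms(2) _ assms(4)])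
  also have "map_poly \<phi> (map_poly \<iota>K p) = map_poly \<iota>M p"
    using assms(1) homrD(1)[OF homC_homr[OF assms(1)]]
    by (subst map_poly_map_poly) (auto simp: homC_def o_def)
  finally show ?thesis .
qed

lemma homC_nonzero: assumes "homC \<iota>K \<iota>M R \<phi>" "subr R" "range \<iota>K \<subseteq> R" "R \<subseteq> K.Alg" "x \<in> R" "x \<noteq> 0"
  shows "\<phi> x \<noteq> 0"
proof
  assume "\<phi> x = 0"
  have xa: "x \<in> K.Alg" using assms by auto
  have "poly (map_poly \<iota>M (K.minp x)) (\<phi> x) = \<phi> (poly (map_poly \<iota>K (K.minp x)) x)"
    using homC_poly[OF assms(1-3,5)] by simp
  also have "\<dots> = 0" using K.minp(2)[OF xa] homrD(1)[OF homC_homr[OF assms(1)]] by simp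
  finally have "\<iota>M (poly.coeff (K.minp x) 0) = 0" using \<open>\<phi> x = 0\<close> by (simp add: poly_0_coeff_0 coeff_map_poly)
  then show False using K.minp_coeff0[OF xa assms(6)] by simp
qed

lemma homC_inj: assumes "homC \<iota>K \<iota>M R \<phi>" "subr R" "range \<iota>K \<subseteq> R" "R \<subseteq> K.Alg"
  shows "inj_on \<phi> R"
proof (rule inj_onI)
  fix x y assume xy: "x \<in> R" "y \<in> R" "\<phi> x = \<phi> y"
  have "\<phi> (x - y) = 0" using homr_diff[OF homC_homr[OF assms(1)] assms(2) xy(1,2)] xy(3) by simp
  then show "x = y" using homC_nonzero[OF assms, of "x - y"] subrD(6)[OF assms(2) xy(1,2)] by auto
qed

lemma simple_hom: assumes "x \<in> K.Alg" "poly (map_poly \<iota>M (K.minp x)) z = 0"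
  shows "\<exists>\<psi>. homC \<iota>K \<iota>M (gen \<iota>K {x}) \<psi> \<and> \<psi> x = z"
proof -
  define ev where "ev g = poly (map_poly \<iota>K g) x" for g
  define evM where "evM g = poly (map_poly \<iota>M g) z" for g
  have key: "evM g = evM h" if "ev g = ev h" for g h
  proof -
    have "poly (map_poly \<iota>K (g - h)) x = 0" using that by (simp add: ev_def)
    then have "K.minp x dvd g - h" by (rule K.minp_dvd[OF assms(1)])
    then obtain k where "g - h = K.minp x * k" by (auto elim: dvdE)
    then have "map_poly \<iota>M g - map_poly \<iota>M h = map_poly \<iota>M (K.minp x) * map_poly \<iota>M k"
      by (metis M.map_poly_diff M.map_poly_mult)
    then have "poly (map_poly \<iota>M g) z - poly (map_poly \<iota>M h) z = 0" using assms(2)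
      by (metis mult_zero_left poly_diff poly_mult)
    then show ?thesis by (simp add: evM_def)
  qed
  define \<psi> where "\<psi> v = evM (SOME g. v = ev g)" for v
  have psi: "\<psi> (ev g) = evM g" for g
  proof -
    have "ev g = ev (SOME h. ev g = ev h)" by (rule someI[of "\<lambda>h. ev g = ev h" g]) simp
    then show ?thesis unfolding \<psi>_def using key by metis
  qed
  have G: "gen \<iota>K {x} = range ev" using K.gen_single unfolding ev_def by auto
  have "homC \<iota>K \<iota>M (gen \<iota>K {x}) \<psi>"
    unfolding homC_def G
  proof (intro conjI ballI allI)
    fix u v assume "u \<in> range ev" "v \<in> range ev"
    then obtain g h where gh: "u = ev g" "v = ev h" by auto
    have "u + v = ev (g + h)" "u * v = ev (g * h)" using gh by (simp_all add: ev_def)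
    then show "\<psi> (u + v) = \<psi> u + \<psi> v" "\<psi> (u * v) = \<psi> u * \<psi> v"
      using gh by (simp_all add: psi evM_def)
  next
    fix c
    have "\<iota>K c = ev [:c:]" by (simp add: ev_def map_poly_pCons)
    then show "\<psi> (\<iota>K c) = \<iota>M c" by (simp add: psi evM_def map_poly_pCons)
  qed
  moreover have "\<psi> x = z"
  proof -
    have "x = ev [:0, 1:]" by (simp add: ev_def map_poly_pCons)
    then show ?thesis by (simp add: psi evM_def map_poly_pCons)
  qed
  ultimately show ?thesis by blast
qed

end

context rh2 begin

lemma range_gen: "range \<iota>K \<subseteq> gen \<iota>K S" by (auto intro: gen.intros)

lemma ext_hom:
  assumes roots: "\<And>p::'m poly. Polynomial.degree p > 0 \<Longrightarrow> \<exists>w. poly p w = 0"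
    and hom: "homC \<iota>K \<iota>M (gen \<iota>K T) \<phi>" and T: "T \<subseteq> K.Alg" and b: "b \<in> K.Alg"
  shows "\<exists>\<phi>'. homC \<iota>K \<iota>M (gen \<iota>K (insert b T)) \<phi>' \<and> (\<forall>x\<in>gen \<iota>K T. \<phi>' x = \<phi> x)"
proof -
  define R where "R = gen \<iota>K T"
  have sR: "subr R" unfolding R_def by (rule K.subr_gen)
  have rR: "range \<iota>K \<subseteq> R" unfolding R_def by (rule range_gen)
  have aR: "R \<subseteq> K.Alg" unfolding R_def by (rule K.gen_alg[OF T])
  have hR: "homC \<iota>K \<iota>M R \<phi>" using hom unfolding R_def .
  have hr: "homr R \<phi>" by (rule homC_homr[OF hR])
  have nz: "\<phi> x \<noteq> 0" if "x \<in> R" "x \<noteq> 0" for x by (rule homC_nonzero[OF hR sR rR aR that])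
  have polyin_map: "polyin R (map_poly \<iota>K p)" for p using rR by (auto simp: polyin_def coeff_map_poly)
  define P where "P g \<longleftrightarrow> polyin R g \<and> g \<noteq> 0 \<and> poly g b = 0" for g
  have "P (map_poly \<iota>K (K.minp b))" unfolding P_def using K.minp[OF b] polyin_map by simp
  then obtain m where m: "P m" and mmin: "\<And>g. P g \<Longrightarrow> Polynomial.degree m \<le> Polynomial.degree g"
    using ex_has_least_nat[of P _ Polynomial.degree] by blast
  have mR: "polyin R m" and m0: "m \<noteq> 0" and mb: "poly m b = 0" using m unfolding P_def by auto
  define lc where "lc = Polynomial.lead_coeff m"
  have lcR: "lc \<in> R" using mR unfolding lc_def polyin_def by blast
  have lc0: "lc \<noteq> 0" using m0 unfolding lc_def by simp
  have dm: "Polynomial.degree m > 0"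
  proof (rule ccontr)
    assume "\<not> ?thesis"
    then obtain c where "m = [:c:]" by (metis degree_eq_zeroE neq0_conv)
    then show False using m0 mb by simp
  qed
  have dmm: "Polynomial.degree (map_poly \<phi> m) = Polynomial.degree m"
    by (rule map_poly_degree_eq) (use nz lcR lc0 in \<open>simp add: lc_def\<close>)
  have "\<exists>w. poly (map_poly \<phi> m) w = 0" by (rule roots) (simp add: dmm dm)
  then obtain w where w: "poly (map_poly \<phi> m) w = 0" by blast
  have mapc: "map_poly \<phi> [:c:] = [:\<phi> c:]" for c using homrD(1)[OF hr] by (simp add: map_poly_pCons)
  have Z: "poly (map_poly \<phi> g) w = 0" if "polyin R g" "poly g b = 0" for g
    using that
  proof (induction "Polynomial.degree g" arbitrary: g rule: less_induct)
    case less
    show ?case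
    proof (cases "g = 0")
      case True then show ?thesis by simp
    next
      case False
      then have "P g" using less.prems unfolding P_def by blast
      then have dg: "Polynomial.degree m \<le> Polynomial.degree g" by (rule mmin)
      define k where "k = Polynomial.degree g - Polynomial.degree m"
      define lg where "lg = Polynomial.lead_coeff g"
      have lgR: "lg \<in> R" using less.prems unfolding lg_def polyin_def by blast
      define g' where "g' = [:lc:] * g - Polynomial.monom lg k * m"
      have g'R: "polyin R g'" unfolding g'_def
        by (intro polyin_diff polyin_mult polyin_const polyin_monom sR lcR lgR less.prems mR)
      have g'b: "poly g' b = 0" unfolding g'_def using less.prems mb by simp
      have "Polynomial.degree ([:lc:] * g) \<le> Polynomial.degree g"
        by (metis degree_mult_le degree_pCons_0 add_0)
      moreover have "Polynomial.degree (Polynomial.monom lg k * m) \<le> Polynomial.degree g"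
        using degree_mult_le[of "Polynomial.monom lg k" m] degree_monom_le[of lg k] dg
        unfolding k_def by linarith
      ultimately have "Polynomial.degree g' \<le> Polynomial.degree g"
        unfolding g'_def by (rule degree_diff_le)
      moreover have "poly.coeff g' (Polynomial.degree g) = 0"
      proof -
        have e: "Polynomial.degree g - (Polynomial.degree g - Polynomial.degree m) = Polynomial.degree m"
          using dg by simp
        have "poly.coeff (Polynomial.monom lg k * m) (Polynomial.degree g) = lg * lc"
          by (simp add: coeff_monom_mult k_def lc_def e)
        moreover have "poly.coeff ([:lc:] * g) (Polynomial.degree g) = lc * lg" by (simp add: lg_def)
        ultimately show ?thesis unfolding g'_def by (simp add: mult.commute)
      qed
      ultimately have "Polynomial.degree g' < Polynomial.degree g"
        using dm dg by (intro degree_less_if_coeff) auto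
      then have IH: "poly (map_poly \<phi> g') w = 0" using less.hyps g'R g'b by blast
      have A: "map_poly \<phi> g' = map_poly \<phi> ([:lc:] * g) - map_poly \<phi> (Polynomial.monom lg k * m)"
        unfolding g'_def
        by (rule map_poly_diff_on[OF hr sR]) (intro polyin_mult polyin_const polyin_monom sR lcR lgR less.prems mR)+
      have B: "map_poly \<phi> ([:lc:] * g) = [:\<phi> lc:] * map_poly \<phi> g"
        by (subst map_poly_mult_on[OF hr sR]) (auto intro: polyin_const sR lcR less.prems simp: mapc)
      have C: "map_poly \<phi> (Polynomial.monom lg k * m) = Polynomial.monom (\<phi> lg) k * map_poly \<phi> m"
        by (subst map_poly_mult_on[OF hr sR]) (auto intro: polyin_monom sR lgR mR simp: map_poly_monom homrD(1)[OF hr])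
      have "map_poly \<phi> g' = [:\<phi> lc:] * map_poly \<phi> g - Polynomial.monom (\<phi> lg) k * map_poly \<phi> m"
        using A B C by simp
      then have "\<phi> lc * poly (map_poly \<phi> g) w = 0" using IH w by simp
      then show ?thesis using nz[OF lcR lc0] by simp
    qed
  qed
  define G where "G = gen \<iota>K (insert b T)"
  have sG: "subr G" unfolding G_def by (rule K.subr_gen)
  have RG: "R \<subseteq> G" unfolding R_def G_def by (rule gen_mono) auto
  have bG: "b \<in> G" unfolding G_def by (auto intro: gen.intros)
  have Gchar: "G = {poly g b | g. polyin R g}"
  proof
    show "G \<subseteq> {poly g b | g. polyin R g}" unfolding G_def
    proof (rule gen_minimal)
      show "\<iota>K c \<in> {poly g b | g. polyin R g}" for c
        using rR by (intro CollectI exI[of _ "[:\<iota>K c:]"]) (auto intro: polyin_const[OF sR])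
      show "insert b T \<subseteq> {poly g b | g. polyin R g}"
      proof
        fix s assume "s \<in> insert b T"
        then show "s \<in> {poly g b | g. polyin R g}"
        proof
          assume "s = b" then show ?thesis by (intro CollectI exI[of _ "[:0, 1:]"]) (simp add: polyin_X[OF sR])
        next
          assume "s \<in> T" then have "s \<in> R" unfolding R_def by (rule gen_base)
          then show ?thesis by (intro CollectI exI[of _ "[:s:]"]) (simp add: polyin_const[OF sR])
        qed
      qed
      show "u + v \<in> {poly g b | g. polyin R g}" if uv: "u \<in> {poly g b | g. polyin R g}"
        "v \<in> {poly g b | g. polyin R g}" for u v
      proof -
        obtain g h where "u = poly g b" "v = poly h b" "polyin R g" "polyin R h" using uv by blast
        then show ?thesis by (intro CollectI exI[of _ "g + h"]) (simp add: polyin_add[OF sR])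
      qed
      show "u * v \<in> {poly g b | g. polyin R g}" if uv: "u \<in> {poly g b | g. polyin R g}"
        "v \<in> {poly g b | g. polyin R g}" for u v
      proof -
        obtain g h where "u = poly g b" "v = poly h b" "polyin R g" "polyin R h" using uv by blast
        then show ?thesis by (intro CollectI exI[of _ "g * h"]) (simp add: polyin_mult[OF sR])
      qed
    qed
    show "{poly g b | g. polyin R g} \<subseteq> G"
    proof clarify
      fix g assume "polyin R g"
      then have "polyin G g" using RG unfolding polyin_def by blast
      then show "poly g b \<in> G" by (rule poly_in_subr[OF sG _ bG])
    qed
  qed
  have key: "poly (map_poly \<phi> g) w = poly (map_poly \<phi> h) w"
    if "polyin R g" "polyin R h" "poly g b = poly h b" for g h
  proof -
    have "poly (map_poly \<phi> (g - h)) w = 0" using Z[of "g - h"] that polyin_diff[OF sR] by simp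
    then show ?thesis using map_poly_diff_on[OF hr sR that(1,2)] by simp
  qed
  define \<phi>' where "\<phi>' v = poly (map_poly \<phi> (SOME g. polyin R g \<and> v = poly g b)) w" for v
  have phi': "\<phi>' (poly g b) = poly (map_poly \<phi> g) w" if "polyin R g" for g
  proof -
    have "polyin R (SOME h. polyin R h \<and> poly g b = poly h b) \<and>
          poly g b = poly (SOME h. polyin R h \<and> poly g b = poly h b) b"
      by (rule someI[of "\<lambda>h. polyin R h \<and> poly g b = poly h b" g]) (simp add: that)
    then show ?thesis unfolding \<phi>'_def using key[OF that] by metis
  qed
  have "homC \<iota>K \<iota>M G \<phi>'"
    unfolding homC_def
  proof (intro conjI ballI allI)
    fix u v assume "u \<in> G" "v \<in> G"
    then obtain g h where gh: "u = poly g b" "v = poly h b" "polyin R g" "polyin R h"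
      unfolding Gchar by blast
    have "\<phi>' (u + v) = \<phi>' (poly (g + h) b)" using gh by simp
    also have "\<dots> = poly (map_poly \<phi> (g + h)) w" by (rule phi'[OF polyin_add[OF sR gh(3,4)]])
    also have "\<dots> = poly (map_poly \<phi> g) w + poly (map_poly \<phi> h) w"
      by (simp add: map_poly_add_on[OF hr gh(3,4)])
    also have "\<dots> = \<phi>' u + \<phi>' v" using gh phi' by simp
    finally show "\<phi>' (u + v) = \<phi>' u + \<phi>' v" .
    have "\<phi>' (u * v) = \<phi>' (poly (g * h) b)" using gh by simp
    also have "\<dots> = poly (map_poly \<phi> (g * h)) w" by (rule phi'[OF polyin_mult[OF sR gh(3,4)]])
    also have "\<dots> = poly (map_poly \<phi> g) w * poly (map_poly \<phi> h) w"
      by (simp add: map_poly_mult_on[OF hr sR gh(3,4)])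
    also have "\<dots> = \<phi>' u * \<phi>' v" using gh phi' by simp
    finally show "\<phi>' (u * v) = \<phi>' u * \<phi>' v" .
  next
    fix c
    have "\<iota>K c \<in> R" using rR by auto
    then have "\<phi>' (poly [:\<iota>K c:] b) = poly [:\<phi> (\<iota>K c):] w" using phi'[of "[:\<iota>K c:]"] polyin_const[OF sR]
      by (simp add: mapc)
    then show "\<phi>' (\<iota>K c) = \<iota>M c" using hR unfolding homC_def by simp
  qed
  moreover have "\<phi>' x = \<phi> x" if "x \<in> R" for x
    using phi'[of "[:x:]"] polyin_const[OF sR that] by (simp add: mapc)
  ultimately show ?thesis unfolding G_def R_def by blast
qed

lemma ext_hom_fin:
  assumes roots: "\<And>p::'m poly. Polynomial.degree p > 0 \<Longrightarrow> \<exists>w. poly p w = 0"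
    and "finite S" "S \<subseteq> K.Alg"
    and hom: "homC \<iota>K \<iota>M (gen \<iota>K T) \<phi>" and T: "T \<subseteq> K.Alg"
  shows "\<exists>\<phi>'. homC \<iota>K \<iota>M (gen \<iota>K (S \<union> T)) \<phi>' \<and> (\<forall>x\<in>gen \<iota>K T. \<phi>' x = \<phi> x)"
  using assms(2,3)
proof (induction S)
  case empty then show ?case using hom by auto
next
  case (insert b S)
  then obtain \<phi>1 where 1: "homC \<iota>K \<iota>M (gen \<iota>K (S \<union> T)) \<phi>1" "\<forall>x\<in>gen \<iota>K T. \<phi>1 x = \<phi> x" by auto
  obtain \<phi>2 where 2: "homC \<iota>K \<iota>M (gen \<iota>K (insert b (S \<union> T))) \<phi>2"
    "\<forall>x\<in>gen \<iota>K (S \<union> T). \<phi>2 x = \<phi>1 x"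
  proof -
    have ST: "S \<union> T \<subseteq> K.Alg" using insert T by auto
    have "b \<in> K.Alg" using insert by auto
    then show ?thesis using ext_hom[OF roots 1(1) ST, of b] that by blast
  qed
  have "gen \<iota>K T \<subseteq> gen \<iota>K (S \<union> T)" by (rule gen_mono) auto
  then show ?case using 1 2 by (intro exI[of _ \<phi>2]) auto
qed

end

lemma fin_subfield_gen:
  fixes W :: "'k::field set"
  assumes fin: "finite W" and sub: "1 \<in> W" "\<And>x y. x \<in> W \<Longrightarrow> y \<in> W \<Longrightarrow> x + y \<in> W"
    "\<And>x y. x \<in> W \<Longrightarrow> y \<in> W \<Longrightarrow> x * y \<in> W" "\<And>x. x \<in> W \<Longrightarrow> - x \<in> W"
    "\<And>x. x \<in> W \<Longrightarrow> x \<noteq> 0 \<Longrightarrow> inverse x \<in> W"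
  shows "\<exists>y\<in>W. \<forall>x\<in>W. x \<noteq> 0 \<longrightarrow> (\<exists>i. x = y ^ i)"
proof -
  define R0 where "R0 = (ring_of_type_algebra :: 'k ring)"
  interpret R0: field R0 unfolding R0_def by (rule field_from_type_algebra)
  have car: "carrier R0 = UNIV" and ops: "(\<otimes>\<^bsub>R0\<^esub>) = (*)" "(\<oplus>\<^bsub>R0\<^esub>) = (+)" "\<one>\<^bsub>R0\<^esub> = 1" "\<zero>\<^bsub>R0\<^esub> = 0"
    by (simp_all add: R0_def ring_of_type_algebra_def)
  have ainv: "\<ominus>\<^bsub>R0\<^esub> x = - x" for x
    using R0.add.inv_equality[of "-x" x] by (simp add: car ops)
  have minv: "inv\<^bsub>R0\<^esub> x = inverse x" if "x \<noteq> 0" for x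
    using R0.comm_inv_char[of x "inverse x"] that by (simp add: car ops)
  have "subring W R0"
    by (rule R0.subringI) (use sub in \<open>auto simp: car ops ainv\<close>)
  then have "subfield W R0"
    by (rule R0.subfieldI') (use sub in \<open>auto simp: ops minv\<close>)
  then have F: "field (R0\<lparr>carrier := W\<rparr>)" by (rule R0.subfield_iff(2))
  have "finite (carrier (R0\<lparr>carrier := W\<rparr>))" using fin by simp
  from field.finite_field_mult_group_has_gen[OF F this]
  obtain a where a: "a \<in> W - {0}"
    "W - {0} = {a [^]\<^bsub>R0\<lparr>carrier := W\<rparr>\<^esub> i | i::nat. i \<in> UNIV}"
    by (auto simp: ops)
  have pw: "a [^]\<^bsub>R0\<lparr>carrier := W\<rparr>\<^esub> (i::nat) = a ^ i" for i
    by (induction i) (simp_all add: ops mult.commute)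
  show ?thesis using a pw by (intro bexI[of _ a]) auto
qed


definition vsub :: "('c::field \<Rightarrow> 'k::field) \<Rightarrow> 'k set \<Rightarrow> bool" where
  "vsub \<iota> V \<longleftrightarrow> (\<forall>x\<in>V. \<forall>y\<in>V. x + y \<in> V) \<and> (\<forall>c. \<forall>x\<in>V. \<iota> c * x \<in> V)"

context rh begin

lemma no_cover:
  assumes inf: "infinite (UNIV :: 'c set)" and "finite VV" and VV: "\<forall>V\<in>VV. vsub \<iota> V \<and> \<not> W \<subseteq> V"
    and W: "vsub \<iota> W" "0 \<in> W"
  shows "\<exists>x\<in>W. \<forall>V\<in>VV. x \<notin> V"
  using assms(2,3)
proof (induction VV)
  case empty then show ?case using W by auto
next
  case (insert V VV)
  then obtain x where x: "x \<in> W" "\<forall>V'\<in>VV. x \<notin> V'" by auto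
  show ?case
  proof (cases "x \<in> V")
    case False then show ?thesis using x by auto
  next
    case True
    have vV: "vsub \<iota> V" and "\<not> W \<subseteq> V" using insert.prems by auto
    then obtain y where y: "y \<in> W" "y \<notin> V" by auto
    have sub: "u + \<iota> c * v \<in> V'" if "vsub \<iota> V'" "u \<in> V'" "v \<in> V'" for V' u v c
      using that unfolding vsub_def by blast
    have single: "c1 = c2" if "V' \<in> VV" "y + \<iota> c1 * x \<in> V'" "y + \<iota> c2 * x \<in> V'" for V' c1 c2
    proof (rule ccontr)
      assume ne: "c1 \<noteq> c2"
      have vV': "vsub \<iota> V'" using insert.prems that(1) by auto
      have "(y + \<iota> c1 * x) + \<iota> (-1) * (y + \<iota> c2 * x) \<in> V'" by (rule sub[OF vV' that(2,3)])
      then have "\<iota> (c1 - c2) * x \<in> V'" by (simp add: algebra_simps)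
      then have "\<iota> (inverse (c1 - c2)) * (\<iota> (c1 - c2) * x) \<in> V'"
        using vV' unfolding vsub_def by blast
      then have "x \<in> V'" using ne by (simp flip: mult mult.assoc)
      then show False using x that(1) by blast
    qed
    have "{c. \<exists>V'\<in>VV. y + \<iota> c * x \<in> V'} = (\<Union>V'\<in>VV. {c. y + \<iota> c * x \<in> V'})" by auto
    moreover have "finite {c. y + \<iota> c * x \<in> V'}" if "V' \<in> VV" for V'
    proof (cases "\<exists>c. y + \<iota> c * x \<in> V'")
      case True
      then obtain c0 where "y + \<iota> c0 * x \<in> V'" by blast
      then have "{c. y + \<iota> c * x \<in> V'} \<subseteq> {c0}" using single[OF that] by blast
      then show ?thesis by (rule finite_subset) simp
    qed simp
    ultimately have "finite {c. \<exists>V'\<in>VV. y + \<iota> c * x \<in> V'}" using insert.hyps(1) by simp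
    then obtain c where c: "c \<notin> {c. \<exists>V'\<in>VV. y + \<iota> c * x \<in> V'}" using ex_new_if_finite[OF inf] by blast
    have zW: "y + \<iota> c * x \<in> W" by (rule sub[OF W(1) y(1) x(1)])
    have "y + \<iota> c * x \<notin> V"
    proof
      assume "y + \<iota> c * x \<in> V"
      then have "(y + \<iota> c * x) + \<iota> (- c) * x \<in> V" by (rule sub[OF vV _ True])
      then show False using y(2) by (simp add: algebra_simps)
    qed
    then show ?thesis using zW c by (intro bexI[of _ "y + \<iota> c * x"]) auto
  qed
qed

lemma vsub_gen: "vsub \<iota> (gen \<iota> S)"
  unfolding vsub_def by (auto intro: gen.intros)

lemma gen_closed: assumes "S \<subseteq> W" "gen \<iota> W \<subseteq> W" shows "gen \<iota> S \<subseteq> W"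
  using gen_mono[OF assms(1)] assms(2) by blast

end

context rh2 begin

lemma homC_determined: assumes "homC \<iota>K \<iota>M (gen \<iota>K S) \<phi>" "homC \<iota>K \<iota>M (gen \<iota>K S) \<psi>"
  "\<forall>s\<in>S. \<phi> s = \<psi> s" "x \<in> gen \<iota>K S" shows "\<phi> x = \<psi> x"
  using assms(4)
proof (induction rule: gen.induct)
  case (gen_const c) then show ?case using assms(1,2) unfolding homC_def by simp
next
  case (gen_base s) then show ?case using assms(3) by simp
next
  case (gen_add x y) then show ?case using assms(1,2) unfolding homC_def by simp
next
  case (gen_mult x y) then show ?case using assms(1,2) unfolding homC_def by simp
qed

lemma homC_restrict: assumes "homC \<iota>K \<iota>M (gen \<iota>K S) \<phi>"
  shows "homC \<iota>K \<iota>M (gen \<iota>K S) (restrict \<phi> (gen \<iota>K S))"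
  using assms unfolding homC_def by (auto intro: gen.intros)

lemma finite_homs: assumes "finite S" "S \<subseteq> K.Alg"
  shows "finite ((\<lambda>\<phi>. restrict \<phi> (gen \<iota>K S)) ` {\<phi>. homC \<iota>K \<iota>M (gen \<iota>K S) \<phi>})"
proof -
  define H where "H = (\<lambda>\<phi>. restrict \<phi> (gen \<iota>K S)) ` {\<phi>. homC \<iota>K \<iota>M (gen \<iota>K S) \<phi>}"
  define rts where "rts s = {w. poly (map_poly \<iota>M (K.minp s)) w = 0}" for s
  have frts: "finite (rts s)" if "s \<in> S" for s
    unfolding rts_def using K.minp(1)[of s] that assms(2) by (intro poly_roots_finite) auto
  have into: "(\<lambda>f. restrict f S) ` H \<subseteq> PiE S rts"
    unfolding H_def
  proof clarify
    fix \<phi> assume h: "homC \<iota>K \<iota>M (gen \<iota>K S) \<phi>"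
    show "restrict (restrict \<phi> (gen \<iota>K S)) S \<in> PiE S rts"
    proof (rule restrict_PiE_iff[THEN iffD2], intro ballI)
      fix s assume s: "s \<in> S"
      then have sg: "s \<in> gen \<iota>K S" by (rule gen_base)
      have "poly (map_poly \<iota>M (K.minp s)) (\<phi> s) = \<phi> (poly (map_poly \<iota>K (K.minp s)) s)"
        using homC_poly[OF h K.subr_gen range_gen sg] by simp
      also have "\<dots> = 0" using K.minp(2)[of s] s assms(2) homrD(1)[OF homC_homr[OF h]] by auto
      finally show "restrict \<phi> (gen \<iota>K S) s \<in> rts s" using sg by (simp add: rts_def)
    qed
  qed
  have inj: "inj_on (\<lambda>f. restrict f S) H"
  proof (rule inj_onI)
    fix f g assume "f \<in> H" "g \<in> H" and eq: "restrict f S = restrict g S"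
    then obtain \<phi> \<psi> where fg: "f = restrict \<phi> (gen \<iota>K S)" "g = restrict \<psi> (gen \<iota>K S)"
      "homC \<iota>K \<iota>M (gen \<iota>K S) \<phi>" "homC \<iota>K \<iota>M (gen \<iota>K S) \<psi>" unfolding H_def by auto
    have "\<forall>s\<in>S. \<phi> s = \<psi> s"
    proof
      fix s assume s: "s \<in> S"
      then have "restrict f S s = restrict g S s" using eq by simp
      then show "\<phi> s = \<psi> s" using s fg(1,2) gen_base[of s S \<iota>K] by simp
    qed
    then have "\<forall>x\<in>gen \<iota>K S. \<phi> x = \<psi> x" using homC_determined[OF fg(3,4)] by blast
    then show "f = g" unfolding fg by (auto simp: restrict_def)
  qed
  have "finite (PiE S rts)" using assms(1) frts by (intro finite_PiE) auto
  then have "finite ((\<lambda>f. restrict f S) ` H)" using into by (rule finite_subset[rotated])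
  then show ?thesis using inj finite_imageD unfolding H_def by blast
qed

end

lemma sentence_root:
  fixes \<iota>K :: "'c::field \<Rightarrow> 'k::field" and \<iota>L :: "'c \<Rightarrow> 'l::field"
  assumes "rh \<iota>K" "rh \<iota>L" "Th_ex1 \<iota>K \<subseteq> Th_ex1 \<iota>L" "y \<in> rel_alg_closure \<iota>K"
  shows "\<exists>z. poly (map_poly \<iota>L (rh.minp \<iota>K y)) z = 0"
proof -
  interpret K: rh \<iota>K by fact
  interpret L: rh \<iota>L by fact
  define \<phi> :: "'c ex1" where "\<phi> = ExS (QEq (tm_of_poly (K.minp y)) Zero)"
  have "\<phi> \<in> Th_ex1 \<iota>K" unfolding \<phi>_def Th_ex1_def
    using K.minp(2)[OF assms(4)] by (auto simp: K.tval_tm_of_poly)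
  then have "\<phi> \<in> Th_ex1 \<iota>L" using assms(3) by blast
  then show ?thesis unfolding \<phi>_def Th_ex1_def by (auto simp: L.tval_tm_of_poly)
qed

lemma rh_to_ac: assumes "rh \<iota>L" shows "rh (\<lambda>c. to_ac (\<iota>L c))"
  using assms unfolding rh_def ring_hom_fn_def by simp

lemma FC:
  fixes \<iota>K :: "'c::field \<Rightarrow> 'k::field" and \<iota>L :: "'c \<Rightarrow> 'l::field"
  assumes rK: "rh \<iota>K" and rL: "rh \<iota>L" and Th: "Th_ex1 \<iota>K \<subseteq> Th_ex1 \<iota>L"
    and S: "finite S" "S \<subseteq> rel_alg_closure \<iota>K"
  shows "\<exists>\<psi>. homC \<iota>K \<iota>L (gen \<iota>K S) \<psi>"
proof -
  interpret K: rh \<iota>K by fact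
  interpret L: rh \<iota>L by fact
  interpret KL: rh2 \<iota>K \<iota>L by unfold_locales
  define W where "W = gen \<iota>K S"
  have WA: "W \<subseteq> K.Alg" unfolding W_def by (rule K.gen_alg[OF S(2)])
  have Wgen: "gen \<iota>K W \<subseteq> W" unfolding W_def
    by (rule gen_minimal) (auto intro: gen.intros)
  show ?thesis
  proof (cases "finite (UNIV :: 'c set)")
    case True
    obtain B where B: "finite B" "1 \<in> K.vs.span B" "\<forall>u\<in>K.vs.span B. \<forall>v\<in>K.vs.span B. u * v \<in> K.vs.span B"
      "S \<subseteq> K.vs.span B" using K.fin_span[OF S] by auto
    have "W \<subseteq> K.vs.span B" unfolding W_def by (rule K.gen_in_span[OF B(2-4)])
    also have "K.vs.span B \<subseteq> (\<lambda>u. \<Sum>v\<in>B. \<iota>K (u v) * v) ` PiE B (\<lambda>_. UNIV)"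
    proof
      fix x assume "x \<in> K.vs.span B"
      then obtain u where "x = (\<Sum>v\<in>B. \<iota>K (u v) * v)" using K.vs.span_finite[OF B(1)] by auto
      then have "x = (\<Sum>v\<in>B. \<iota>K (restrict u B v) * v)" by simp
      then show "x \<in> (\<lambda>u. \<Sum>v\<in>B. \<iota>K (u v) * v) ` PiE B (\<lambda>_. UNIV)"
        by (rule image_eqI[of _ _ "restrict u B"]) auto
    qed
    finally have Wsub: "W \<subseteq> (\<lambda>u. \<Sum>v\<in>B. \<iota>K (u v) * v) ` PiE B (\<lambda>_. UNIV)" .
    have "finite ((\<lambda>u. \<Sum>v\<in>B. \<iota>K (u v) * v) ` PiE B (\<lambda>_. UNIV :: 'c set))"
      by (intro finite_imageI finite_PiE B(1)) (simp add: True)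
    then have finW: "finite W" using Wsub by (rule finite_subset[rotated])
    have sW: "subr W" unfolding W_def by (rule K.subr_gen)
    have invW: "inverse x \<in> W" if "x \<in> W" "x \<noteq> 0" for x
    proof -
      have "(\<lambda>u. x * u) ` W \<subseteq> W" using subrD(4)[OF sW that(1)] by auto
      moreover have "inj_on (\<lambda>u. x * u) W" using that(2) by (auto intro: inj_onI)
      ultimately have "(\<lambda>u. x * u) ` W = W" using endo_inj_surj[OF finW] by blast
      then obtain u where "u \<in> W" "x * u = 1" using subrD(2)[OF sW] by (metis imageE)
      then show ?thesis using that(2) by (metis inverse_unique)
    qed
    obtain y where y: "y \<in> W" "\<forall>x\<in>W. x \<noteq> 0 \<longrightarrow> (\<exists>i. x = y ^ i)"
      using fin_subfield_gen[OF finW subrD(2)[OF sW] subrD(3)[OF sW] subrD(4)[OF sW] subrD(5)[OF sW] invW]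
      by blast
    have "W \<subseteq> gen \<iota>K {y}"
    proof
      fix x assume "x \<in> W"
      show "x \<in> gen \<iota>K {y}"
      proof (cases "x = 0")
        case True then show ?thesis using gen_const[of \<iota>K 0 "{y}"] by simp
      next
        case False then obtain i where "x = y ^ i" using y \<open>x \<in> W\<close> by blast
        then show ?thesis using K.gen_pow[OF gen_base[of y "{y}" \<iota>K]] by simp
      qed
    qed
    moreover have "gen \<iota>K {y} \<subseteq> W" using K.gen_closed[of "{y}" W] y(1) Wgen by auto
    ultimately have Wy: "W = gen \<iota>K {y}" by blast
    have yA: "y \<in> K.Alg" using y(1) WA by blast
    obtain z where "poly (map_poly \<iota>L (K.minp y)) z = 0" using sentence_root[OF rK rL Th yA] by blast
    then obtain \<psi> where "homC \<iota>K \<iota>L (gen \<iota>K {y}) \<psi>" using KL.simple_hom[OF yA] by blast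
    then have "homC \<iota>K \<iota>L (gen \<iota>K S) \<psi>" using Wy unfolding W_def by simp
    then show ?thesis by blast
  next
    case infC: False
    define \<iota>O where "\<iota>O = (\<lambda>c. to_ac (\<iota>L c))"
    interpret O: rh \<iota>O unfolding \<iota>O_def by (rule rh_to_ac[OF rL])
    interpret KO: rh2 \<iota>K \<iota>O by unfold_locales
    have roots: "\<exists>w. poly p w = 0" if "Polynomial.degree p > 0" for p :: "'l alg_closure poly"
      using alg_closed_imp_poly_has_root that by blast
    define Phi where "Phi = (\<lambda>\<phi>. restrict \<phi> W) ` {\<phi>. homC \<iota>K \<iota>O W \<phi>}"
    have finPhi: "finite Phi" unfolding Phi_def W_def by (rule KO.finite_homs[OF S])
    have Phi_hom: "homC \<iota>K \<iota>O W \<phi>" if "\<phi> \<in> Phi" for \<phi>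
      using that KO.homC_restrict unfolding Phi_def W_def by auto
    define VV where "VV \<phi> = {x \<in> W. \<phi> x \<in> range (to_ac :: 'l \<Rightarrow> 'l alg_closure)}" for \<phi>
    show ?thesis
    proof (cases "\<exists>\<phi>\<in>Phi. W \<subseteq> VV \<phi>")
      case True
      then obtain \<phi> where \<phi>: "\<phi> \<in> Phi" "W \<subseteq> VV \<phi>" by blast
      have h: "homC \<iota>K \<iota>O W \<phi>" by (rule Phi_hom[OF \<phi>(1)])
      have rg: "\<phi> x \<in> range to_ac" if "x \<in> W" for x using \<phi>(2) that unfolding VV_def by blast
      have "homC \<iota>K \<iota>L W (\<lambda>x. of_ac (\<phi> x))"
        unfolding homC_def
      proof (intro conjI ballI allI)
        fix x y assume xy: "x \<in> W" "y \<in> W"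
        obtain a b where ab: "\<phi> x = to_ac a" "\<phi> y = to_ac b" using rg[OF xy(1)] rg[OF xy(2)] by blast
        have "\<phi> (x + y) = to_ac (a + b)" "\<phi> (x * y) = to_ac (a * b)"
          using h xy ab unfolding homC_def by simp_all
        then show "of_ac (\<phi> (x + y)) = of_ac (\<phi> x) + of_ac (\<phi> y)"
          "of_ac (\<phi> (x * y)) = of_ac (\<phi> x) * of_ac (\<phi> y)" using ab by (simp_all del: to_ac_add to_ac_mult)
      next
        fix c show "of_ac (\<phi> (\<iota>K c)) = \<iota>L c" using h unfolding homC_def \<iota>O_def by simp
      qed
      then show ?thesis unfolding W_def by blast
    next
      case False
      have vsW: "vsub \<iota>K W" unfolding W_def by (rule K.vsub_gen)
      have vsV: "vsub \<iota>K (VV \<phi>)" if "\<phi> \<in> Phi" for \<phi>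
      proof -
        have h: "homC \<iota>K \<iota>O W \<phi>" by (rule Phi_hom[OF that])
        show ?thesis unfolding vsub_def
        proof (intro conjI ballI allI)
          fix x y assume "x \<in> VV \<phi>" "y \<in> VV \<phi>"
          then obtain a b where "x \<in> W" "y \<in> W" "\<phi> x = to_ac a" "\<phi> y = to_ac b" unfolding VV_def by blast
          then have "\<phi> (x + y) = to_ac (a + b)" using h unfolding homC_def by simp
          moreover have "x + y \<in> W" using vsW \<open>x \<in> W\<close> \<open>y \<in> W\<close> unfolding vsub_def by blast
          ultimately show "x + y \<in> VV \<phi>" unfolding VV_def by blast
        next
          fix c x assume "x \<in> VV \<phi>"
          then obtain a where a: "x \<in> W" "\<phi> x = to_ac a" unfolding VV_def by blast
          have cW: "\<iota>K c \<in> W" unfolding W_def by (rule gen_const)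
          have "\<phi> (\<iota>K c * x) = to_ac (\<iota>L c * a)" using h a cW unfolding homC_def \<iota>O_def by simp
          moreover have "\<iota>K c * x \<in> W" using vsW a(1) unfolding vsub_def by blast
          ultimately show "\<iota>K c * x \<in> VV \<phi>" unfolding VV_def by blast
        qed
      qed
      have "0 \<in> W" using gen_const[of \<iota>K 0 S] unfolding W_def by simp
      have allV: "\<forall>V\<in>VV ` Phi. vsub \<iota>K V \<and> \<not> W \<subseteq> V" using vsV False by blast
      obtain y where y: "y \<in> W" "\<forall>V\<in>VV ` Phi. y \<notin> V"
        using K.no_cover[OF infC finite_imageI[OF finPhi] allV vsW \<open>0 \<in> W\<close>] by blast
      have yA: "y \<in> K.Alg" using y(1) WA by blast
      obtain z where z: "poly (map_poly \<iota>L (K.minp y)) z = 0" using sentence_root[OF rK rL Th yA] by blast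
      have "poly (map_poly \<iota>O (K.minp y)) (to_ac z) = to_ac (poly (map_poly \<iota>L (K.minp y)) z)"
      proof -
        have "to_ac (poly (map_poly \<iota>L (K.minp y)) z) = poly (map_poly to_ac (map_poly \<iota>L (K.minp y))) (to_ac z)"
          by (rule homr_poly[of UNIV]) (auto simp: homr_def subr_def polyin_def)
        also have "map_poly to_ac (map_poly \<iota>L (K.minp y)) = map_poly \<iota>O (K.minp y)"
          by (subst map_poly_map_poly) (auto simp: \<iota>O_def o_def)
        finally show ?thesis by simp
      qed
      then have "poly (map_poly \<iota>O (K.minp y)) (to_ac z) = 0" using z by simp
      then obtain \<phi>0 where \<phi>0: "homC \<iota>K \<iota>O (gen \<iota>K {y}) \<phi>0" "\<phi>0 y = to_ac z"
        using KO.simple_hom[OF yA] by blast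
      obtain \<phi>1 where \<phi>1: "homC \<iota>K \<iota>O (gen \<iota>K (S \<union> {y})) \<phi>1" "\<forall>x\<in>gen \<iota>K {y}. \<phi>1 x = \<phi>0 x"
        using KO.ext_hom_fin[OF roots S \<phi>0(1)] yA by blast
      have "gen \<iota>K (S \<union> {y}) = W" using K.gen_absorb[of y S] y(1) unfolding W_def by simp
      then have h1: "homC \<iota>K \<iota>O W \<phi>1" using \<phi>1(1) by simp
      have "\<phi>1 y = to_ac z" using \<phi>1(2) \<phi>0(2) gen_base[of y "{y}" \<iota>K] by simp
      moreover have "restrict \<phi>1 W \<in> Phi" unfolding Phi_def using h1 by blast
      ultimately have "y \<in> VV (restrict \<phi>1 W)" using y(1) unfolding VV_def by auto
      then show ?thesis using y(2) \<open>restrict \<phi>1 W \<in> Phi\<close> by blast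
    qed
  qed
qed

lemma compactness:
  fixes Rs :: "'a \<Rightarrow> 'b set" and I :: "'a set" and P :: "'a set \<Rightarrow> ('a \<Rightarrow> 'b) \<Rightarrow> bool"
  assumes fin: "\<And>i. i \<in> I \<Longrightarrow> finite (Rs i)"
    and loc: "\<And>S f g. finite S \<Longrightarrow> S \<subseteq> I \<Longrightarrow> (\<forall>i\<in>S. f i = g i) \<Longrightarrow> P S f \<Longrightarrow> P S g"
    and mono: "\<And>S S' f. S \<subseteq> S' \<Longrightarrow> finite S' \<Longrightarrow> S' \<subseteq> I \<Longrightarrow> P S' f \<Longrightarrow> P S f"
    and sat: "\<And>S. finite S \<Longrightarrow> S \<subseteq> I \<Longrightarrow> \<exists>f \<in> PiE I Rs. P S f"
  shows "\<exists>f \<in> PiE I Rs. \<forall>S. finite S \<and> S \<subseteq> I \<longrightarrow> P S f"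
proof -
  define Top where "Top = product_topology (\<lambda>i. discrete_topology (Rs i)) I"
  have top: "topspace Top = PiE I Rs" unfolding Top_def by simp
  have cpt: "compact_space Top" unfolding Top_def
    by (subst compact_space_product_topology) (simp add: compact_space_discrete_topology fin)
  define G where "G S = {f \<in> PiE I Rs. P S f}" for S
  define U where "U = G ` {S. finite S \<and> S \<subseteq> I}"
  have cyl: "openin Top {g \<in> topspace Top. \<forall>i\<in>S. g i = f i}" if "finite S" "S \<subseteq> I" "f \<in> PiE I Rs" for S f
    using that(1,2)
  proof (induction S)
    case empty then show ?case by simp
  next
    case (insert i S)
    have "f i \<in> Rs i" using that(3) insert by auto
    then have o1: "openin Top {g \<in> topspace Top. g i \<in> {f i}}"
      unfolding Top_def using insert
      by (intro openin_continuous_map_preimage[OF continuous_map_product_projection]) auto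
    have "{g \<in> topspace Top. \<forall>j\<in>insert i S. g j = f j} =
          {g \<in> topspace Top. g i \<in> {f i}} \<inter> {g \<in> topspace Top. \<forall>j\<in>S. g j = f j}" by auto
    then show ?case using o1 insert by (simp add: openin_Int)
  qed
  have closed: "closedin Top (G S)" if "finite S" "S \<subseteq> I" for S
    unfolding closedin_def
  proof
    show "G S \<subseteq> topspace Top" unfolding G_def top by auto
    show "openin Top (topspace Top - G S)"
    proof (subst openin_subopen, intro ballI)
      fix f assume f: "f \<in> topspace Top - G S"
      then have fP: "f \<in> PiE I Rs" "\<not> P S f" unfolding top G_def by auto
      show "\<exists>T. openin Top T \<and> f \<in> T \<and> T \<subseteq> topspace Top - G S"
      proof (intro exI conjI)
        show "openin Top {g \<in> topspace Top. \<forall>i\<in>S. g i = f i}" by (rule cyl[OF that fP(1)])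
        show "f \<in> {g \<in> topspace Top. \<forall>i\<in>S. g i = f i}" using fP top by auto
        show "{g \<in> topspace Top. \<forall>i\<in>S. g i = f i} \<subseteq> topspace Top - G S"
        proof clarify
          fix g assume g: "g \<in> topspace Top" "\<forall>i\<in>S. g i = f i" "g \<in> G S"
          then have "P S g" unfolding G_def by auto
          then have "P S f" using loc[OF that, of g f] g(2) by auto
          then show False using fP by blast
        qed
      qed
    qed
  qed
  have "\<Inter>U \<noteq> {}"
  proof (rule cpt[unfolded compact_space_fip, rule_format], intro conjI allI impI)
    show "\<forall>C\<in>U. closedin Top C" unfolding U_def using closed by auto
  next
    fix F assume F: "finite F \<and> F \<subseteq> U"
    then obtain SS where SS: "SS \<subseteq> {S. finite S \<and> S \<subseteq> I}" "finite SS" "F = G ` SS"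
      unfolding U_def by (meson finite_subset_image)
    define S0 where "S0 = \<Union>SS"
    have S0: "finite S0" "S0 \<subseteq> I" using SS unfolding S0_def by auto
    obtain f where f: "f \<in> PiE I Rs" "P S0 f" using sat[OF S0] by blast
    have "f \<in> G S" if "S \<in> SS" for S
      using mono[of S S0 f] that S0 f unfolding G_def S0_def by auto
    then show "\<Inter>F \<noteq> {}" using SS(3) by blast
  qed
  then obtain f where f: "f \<in> \<Inter>U" by blast
  have "G {} \<in> U" unfolding U_def by auto
  then have "f \<in> PiE I Rs" using f unfolding G_def by auto
  moreover have "P S f" if "finite S" "S \<subseteq> I" for S
    using f that unfolding U_def G_def by auto
  ultimately show ?thesis by blast
qed

lemma dir12a:
  fixes \<iota>K :: "'c::field \<Rightarrow> 'k::field" and \<iota>L :: "'c \<Rightarrow> 'l::field"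
  assumes rK: "rh \<iota>K" and rL: "rh \<iota>L" and Th: "Th_ex1 \<iota>K \<subseteq> Th_ex1 \<iota>L"
  shows "\<exists>\<sigma>. embedding_over \<iota>K \<iota>L (rel_alg_closure \<iota>K) \<sigma>"
proof -
  interpret K: rh \<iota>K by fact
  interpret L: rh \<iota>L by fact
  interpret KL: rh2 \<iota>K \<iota>L by unfold_locales
  define Rs where "Rs a = {z. poly (map_poly \<iota>L (K.minp a)) z = 0}" for a
  define P where "P S \<sigma> \<longleftrightarrow> inj_on \<sigma> S \<and>
     (\<forall>x\<in>S. \<forall>y\<in>S. (x + y \<in> S \<longrightarrow> \<sigma> (x + y) = \<sigma> x + \<sigma> y) \<and> (x * y \<in> S \<longrightarrow> \<sigma> (x * y) = \<sigma> x * \<sigma> y)) \<and>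
     (\<forall>c. \<iota>K c \<in> S \<longrightarrow> \<sigma> (\<iota>K c) = \<iota>L c)" for S and \<sigma> :: "'k \<Rightarrow> 'l"
  have finR: "finite (Rs a)" if "a \<in> K.Alg" for a
    unfolding Rs_def using K.minp(1)[OF that] by (intro poly_roots_finite) auto
  have inR: "\<psi> a \<in> Rs a" if "homC \<iota>K \<iota>L (gen \<iota>K S) \<psi>" "a \<in> gen \<iota>K S" "a \<in> K.Alg" for \<psi> S a
  proof -
    have "poly (map_poly \<iota>L (K.minp a)) (\<psi> a) = \<psi> (poly (map_poly \<iota>K (K.minp a)) a)"
      using KL.homC_poly[OF that(1) K.subr_gen KL.range_gen that(2)] by simp
    also have "\<dots> = 0" using K.minp(2)[OF that(3)] homrD(1)[OF KL.homC_homr[OF that(1)]] by simp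
    finally show ?thesis unfolding Rs_def by simp
  qed
  have neR: "\<exists>z. z \<in> Rs a" if a: "a \<in> K.Alg" for a
  proof -
    have "finite {a}" "{a} \<subseteq> K.Alg" using a by auto
    then obtain \<psi> where h: "homC \<iota>K \<iota>L (gen \<iota>K {a}) \<psi>" using FC[OF rK rL Th] by blast
    have "a \<in> gen \<iota>K {a}" by (rule gen_base) simp
    then show ?thesis using inR[OF h _ a] by blast
  qed
  have "\<exists>f \<in> PiE K.Alg Rs. \<forall>S. finite S \<and> S \<subseteq> K.Alg \<longrightarrow> P S f"
  proof (rule compactness)
    show "finite (Rs i)" if "i \<in> K.Alg" for i using finR that .
    show "P S g" if fg: "finite S" "S \<subseteq> K.Alg" "\<forall>i\<in>S. f i = g i" "P S f" for S f g
    proof -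
      have Pf: "inj_on f S" "\<forall>x\<in>S. \<forall>y\<in>S. (x + y \<in> S \<longrightarrow> f (x + y) = f x + f y) \<and> (x * y \<in> S \<longrightarrow> f (x * y) = f x * f y)"
        "\<forall>c. \<iota>K c \<in> S \<longrightarrow> f (\<iota>K c) = \<iota>L c" using fg(4) unfolding P_def by blast+
      have "inj_on g S"
      proof (rule inj_onI)
        fix x y assume xy: "x \<in> S" "y \<in> S" "g x = g y"
        then have "f x = f y" using fg(3) by simp
        then show "x = y" by (rule inj_onD[OF Pf(1) _ xy(1) xy(2)])
      qed
      moreover have "\<forall>x\<in>S. \<forall>y\<in>S. (x + y \<in> S \<longrightarrow> g (x + y) = g x + g y) \<and> (x * y \<in> S \<longrightarrow> g (x * y) = g x * g y)"
      proof (intro ballI conjI impI)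
        fix x y assume xy: "x \<in> S" "y \<in> S"
        show "g (x + y) = g x + g y" if "x + y \<in> S" using Pf(2) xy that fg(3) by simp
        show "g (x * y) = g x * g y" if "x * y \<in> S" using Pf(2) xy that fg(3) by simp
      qed
      moreover have "\<forall>c. \<iota>K c \<in> S \<longrightarrow> g (\<iota>K c) = \<iota>L c" using Pf(3) fg(3) by simp
      ultimately show ?thesis unfolding P_def by blast
    qed
    show "P S f" if "S \<subseteq> S'" "finite S'" "S' \<subseteq> K.Alg" "P S' f" for S S' f
      using that unfolding P_def by (intro conjI) (blast intro: inj_on_subset)+
    show "\<exists>f \<in> PiE K.Alg Rs. P S f" if S: "finite S" "S \<subseteq> K.Alg" for S
    proof -
      obtain \<psi> where \<psi>: "homC \<iota>K \<iota>L (gen \<iota>K S) \<psi>" using FC[OF rK rL Th S] by blast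
      have GA: "gen \<iota>K S \<subseteq> K.Alg" by (rule K.gen_alg[OF S(2)])
      have inj: "inj_on \<psi> (gen \<iota>K S)"
        by (rule KL.homC_inj[OF \<psi> K.subr_gen KL.range_gen GA])
      define f where "f a = (if a \<in> K.Alg then (if a \<in> gen \<iota>K S then \<psi> a else (SOME z. z \<in> Rs a)) else undefined)" for a
      have "f \<in> PiE K.Alg Rs"
      proof (rule PiE_I)
        fix a assume a: "a \<in> K.Alg"
        show "f a \<in> Rs a"
        proof (cases "a \<in> gen \<iota>K S")
          case True then show ?thesis using inR[OF \<psi> True a] a by (simp add: f_def)
        next
          case False then show ?thesis using someI_ex[OF neR[OF a]] a by (simp add: f_def)
        qed
      qed (simp add: f_def)
      moreover have "P S f"
      proof -
        have SG: "S \<subseteq> gen \<iota>K S" by (auto intro: gen_base)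
        have fe: "f a = \<psi> a" if "a \<in> S" for a using that SG GA by (auto simp: f_def)
        have "inj_on f S"
        proof (rule inj_onI)
          fix x y assume xy: "x \<in> S" "y \<in> S" "f x = f y"
          then have "\<psi> x = \<psi> y" using fe by simp
          moreover have "x \<in> gen \<iota>K S" "y \<in> gen \<iota>K S" using xy SG by auto
          ultimately show "x = y" using inj by (auto dest: inj_onD)
        qed
        moreover have "\<forall>x\<in>S. \<forall>y\<in>S. (x + y \<in> S \<longrightarrow> f (x + y) = f x + f y) \<and> (x * y \<in> S \<longrightarrow> f (x * y) = f x * f y)"
        proof (intro ballI conjI impI)
          fix x y assume xy: "x \<in> S" "y \<in> S"
          then have g: "x \<in> gen \<iota>K S" "y \<in> gen \<iota>K S" using SG by auto
          have h: "\<psi> (x + y) = \<psi> x + \<psi> y" "\<psi> (x * y) = \<psi> x * \<psi> y"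
            using \<psi> g unfolding homC_def by auto
          show "f (x + y) = f x + f y" if "x + y \<in> S" using h fe xy that by simp
          show "f (x * y) = f x * f y" if "x * y \<in> S" using h fe xy that by simp
        qed
        moreover have "\<forall>c. \<iota>K c \<in> S \<longrightarrow> f (\<iota>K c) = \<iota>L c" using \<psi> fe unfolding homC_def by auto
        ultimately show ?thesis unfolding P_def by blast
      qed
      ultimately show ?thesis by blast
    qed
  qed
  then obtain \<sigma> where \<sigma>: "\<And>S. finite S \<Longrightarrow> S \<subseteq> K.Alg \<Longrightarrow> P S \<sigma>" by blast
  have "embedding_over \<iota>K \<iota>L K.Alg \<sigma>"
    unfolding embedding_over_def
  proof (intro conjI ballI allI)
    show "inj_on \<sigma> K.Alg"
    proof (rule inj_onI)
      fix x y assume xy: "x \<in> K.Alg" "y \<in> K.Alg" "\<sigma> x = \<sigma> y"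
      have "P {x, y} \<sigma>" using xy by (intro \<sigma>) auto
      then have "inj_on \<sigma> {x, y}" unfolding P_def by blast
      then show "x = y" using xy(3) by (rule inj_onD) auto
    qed
    show c: "\<sigma> (\<iota>K c) = \<iota>L c" for c
    proof -
      have "P {\<iota>K c} \<sigma>" using K.const_Alg[of c] by (intro \<sigma>) auto
      then show ?thesis unfolding P_def by blast
    qed
    show "\<sigma> 1 = 1" using c[of 1] by simp
    fix x y assume xy: "x \<in> K.Alg" "y \<in> K.Alg"
    have "P {x, y, x + y} \<sigma>" using xy K.Alg_add[OF xy] by (intro \<sigma>) auto
    then have "\<forall>a\<in>{x, y, x + y}. \<forall>b\<in>{x, y, x + y}. (a + b \<in> {x, y, x + y} \<longrightarrow> \<sigma> (a + b) = \<sigma> a + \<sigma> b)"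
      unfolding P_def by blast
    moreover have "x \<in> {x, y, x + y}" "y \<in> {x, y, x + y}" "x + y \<in> {x, y, x + y}" by auto
    ultimately show "\<sigma> (x + y) = \<sigma> x + \<sigma> y" by blast
    have "P {x, y, x * y} \<sigma>" using xy K.Alg_mult[OF xy] by (intro \<sigma>) auto
    then have "\<forall>a\<in>{x, y, x * y}. \<forall>b\<in>{x, y, x * y}. (a * b \<in> {x, y, x * y} \<longrightarrow> \<sigma> (a * b) = \<sigma> a * \<sigma> b)"
      unfolding P_def by blast
    moreover have "x \<in> {x, y, x * y}" "y \<in> {x, y, x * y}" "x * y \<in> {x, y, x * y}" by auto
    ultimately show "\<sigma> (x * y) = \<sigma> x * \<sigma> y" by blast
  qed
  then show ?thesis by blast
qed

theorem lemma4p7: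
  fixes \<iota>K :: "'c::field \<Rightarrow> 'k::field" and \<iota>L :: "'c \<Rightarrow> 'l::field"
  assumes "ring_hom_fn \<iota>K" and "ring_hom_fn \<iota>L"
  shows "Th_ex1 \<iota>K \<subseteq> Th_ex1 \<iota>L \<longleftrightarrow>
           ((\<exists>\<sigma>. embedding_over \<iota>K \<iota>L (rel_alg_closure \<iota>K) \<sigma>) \<and>
            (infinite (UNIV :: 'k set) \<longrightarrow> infinite (UNIV :: 'l set)))"
proof -
  have rK: "rh \<iota>K" and rL: "rh \<iota>L" using assms by (simp_all add: rh_def)
  show ?thesis
    using dir21[OF assms] dir12b[OF assms] dir12a[OF rK rL] by blast
qed

end
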